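(* Let $a\le k\le n$ be integers and let $\gamma$ be a boundary condition of the one-row region $\{1\}\times[a,n]$ such that the non-$\varnothing$ values of $\gamma_N$ are exactly $[a,k]$ (each once), the non-$\varnothing$ values of $\gamma_S$ are exactly $[a,k]$ (each once), and $\gamma_E(1)=\gamma_W(1)=\varnothing$. Let $w\in S_{[a,n]}$ (resp. $u\in S_{[a,n]}$) be the permutation with $w(\ell)=\gamma_N^{-1}(\ell)$ (resp. $u(\ell)=\gamma_S^{-1}(\ell)$) for $\ell\in[a,k]$ and decreasing on $(k,n]$. Then $u\xrightarrow{k}w$ if and only if there exists a BPD of $\{1\}\times[a,n]$ satisfying $\gamma$. In this case there is exactly one such BPD $D$, and $\{c: D(1,c)\text{ is blank}\}=\mathrm{fix}_{(k,n]}(u,w)$.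
   Context: $S_{[a,n]}$ is the set of bijections of $\mathbb Z$ fixing every integer outside $[a,n]$; $\gamma_N^{-1}(\ell)$ denotes the column $c$ with $\gamma_N(c)=\ell$ (similarly $\gamma_S^{-1}$). $\tau_{i,j}$ is the transposition of $i<j$, $u\tau_{i,j}=u\circ\tau_{i,j}$, $\ell(u)$ = number of inversions; $u\lessdot_k u\tau_{i,j}$ if $i\le k<j$ and $\ell(u\tau_{i,j})=\ell(u)+1$; $u\xrightarrow{k}w$ if there is a chain $u=v_1\lessdot_k\cdots\lessdot_k v_s=w$ ($s\ge1$), $v_{t+1}=v_t\tau_{i_t,j_t}$, with $v_1(i_1)<\cdots<v_{s-1}(i_{s-1})$. $\mathrm{fix}_I(u,w)=\{u(t):t\in I,\ u(t)=w(t)\}$. Bumpless pipedreams on the one-row region: a tiling assigns each cell $(1,c)$, $c\in[a,n]$, one of: blank; horizontal (pipe joining left and right edges); vertical (top and bottom); r-elbow (bottom and right); j-elbow (top and left); cross (a left–right and a top–bottom pipe, which cross, the top–bottom one vertical). Consistent: adjacent cells agree on whether a pipe uses their common edge. A pipe enters from the row if it crosses the right edge of $(1,n)$, exits from the row if it crosses the left edge of $(1,a)$, enters (exits) from column $c$ if it crosses the top (bottom) edge of $(1,c)$. A BPD is a consistent tiling in which any two pipes cross at most once and every pipe enters and exits. A labeling (distinct integers on pipes) is valid if at each crossing the vertical pipe has the smaller label. A boundary condition $\gamma=(\gamma_N,\gamma_E,\gamma_S,\gamma_W)$, $\gamma_N,\gamma_S:[a,n]\to\mathbb Z\sqcup\{\varnothing\}$,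 $\gamma_E,\gamma_W:\{1\}\to\mathbb Z\sqcup\{\varnothing\}$, is satisfied by a BPD if some valid labeling makes a pipe enter (exit) from the row iff $\gamma_E(1)\neq\varnothing$ ($\gamma_W(1)\ne\varnothing$), with that label, and a pipe enter (exit) from column $c$ iff $\gamma_N(c)\neq\varnothing$ ($\gamma_S(c)\ne\varnothing$), with that label. *)

theory Defs
  imports "HOL-Combinatorics.Transposition"
begin

definition Sperm :: "int \<Rightarrow> int \<Rightarrow> (int \<Rightarrow> int) set" where
  "Sperm a n = {u. bij u \<and> (\<forall>t. t \<notin> {a..n} \<longrightarrow> u t = t)}"

definition perm_length :: "(int \<Rightarrow> int) \<Rightarrow> nat" where
  "perm_length u = card {(i, j). i < j \<and> u j < u i}"

definition kcover :: "int \<Rightarrow> (int \<Rightarrow> int) \<Rightarrow> int \<Rightarrow> int \<Rightarrow> (int \<Rightarrow> int) \<Rightarrow> bool" where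
  "kcover k u i j v \<longleftrightarrow> i \<le> k \<and> k < j \<and> v = u \<circ> transpose i j
      \<and> perm_length v = perm_length u + 1"

text \<open>u --k--> w: a chain v_1 = u, ..., v_s = w (s >= 1) of k-covers
  v_{t+1} = v_t tau_{i_t,j_t} with v_1(i_1) < ... < v_{s-1}(i_{s-1}).
  Lists are 0-indexed: vs ! t is v_{t+1}, is ! t is i_{t+1}, js ! t is j_{t+1}.\<close>
definition kpath :: "int \<Rightarrow> (int \<Rightarrow> int) \<Rightarrow> (int \<Rightarrow> int) \<Rightarrow> bool" where
  "kpath k u w \<longleftrightarrow>
     (\<exists>vs is js. vs \<noteq> [] \<and> hd vs = u \<and> last vs = w
        \<and> length is = length vs - 1 \<and> length js = length vs - 1
        \<and> (\<forall>t < length vs - 1. kcover k (vs ! t) (is ! t) (js ! t) (vs ! (t + 1)))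
        \<and> sorted_wrt (<) (map (\<lambda>t. (vs ! t) (is ! t)) [0..<length vs - 1]))"

definition fixset :: "int set \<Rightarrow> (int \<Rightarrow> int) \<Rightarrow> (int \<Rightarrow> int) \<Rightarrow> int set" where
  "fixset I u w = {u t | t. t \<in> I \<and> u t = w t}"

text \<open>Tiles: blank, horizontal, vertical, r-elbow (bottom and right),
  j-elbow (top and left), cross.\<close>
datatype tile = Blank | Hor | Vert | RElb | JElb | Cross

text \<open>A tiling of the row {1} x [a,n]: the tile of cell (1,c) is D c (only c in [a,n] matters).\<close>
type_synonym tiling = "int \<Rightarrow> tile"

fun uses_left :: "tile \<Rightarrow> bool" where
  "uses_left Hor = True" | "uses_left JElb = True" | "uses_left Cross = True"
| "uses_left _ = False"

fun uses_right :: "tile \<Rightarrow> bool" where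
  "uses_right Hor = True" | "uses_right RElb = True" | "uses_right Cross = True"
| "uses_right _ = False"

text \<open>Consistency: horizontally adjacent cells agree on their common edge
  (the only interior edges of a one-row region).\<close>
definition consistent :: "int \<Rightarrow> int \<Rightarrow> tiling \<Rightarrow> bool" where
  "consistent a n D \<longleftrightarrow> (\<forall>c. a \<le> c \<and> c < n \<longrightarrow> (uses_right (D c) \<longleftrightarrow> uses_left (D (c + 1))))"

text \<open>Edges of the row: VE c is the vertical edge on the left of cell (1,c)
  (= right edge of cell (1,c-1)); TE c / BE c are the top / bottom edges of cell (1,c).\<close>
datatype edge = VE int | TE int | BE int

datatype strand_kind = SH | SV | SR | SJ

fun tile_strands :: "tile \<Rightarrow> strand_kind set" where
  "tile_strands Blank = {}"
| "tile_strands Hor = {SH}"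
| "tile_strands Vert = {SV}"
| "tile_strands RElb = {SR}"
| "tile_strands JElb = {SJ}"
| "tile_strands Cross = {SH, SV}"

fun strand_edges :: "int \<times> strand_kind \<Rightarrow> edge set" where
  "strand_edges (c, SH) = {VE c, VE (c + 1)}"
| "strand_edges (c, SV) = {TE c, BE c}"
| "strand_edges (c, SR) = {BE c, VE (c + 1)}"
| "strand_edges (c, SJ) = {TE c, VE c}"

definition strands :: "int \<Rightarrow> int \<Rightarrow> tiling \<Rightarrow> (int \<times> strand_kind) set" where
  "strands a n D = {(c, s). c \<in> {a..n} \<and> s \<in> tile_strands (D c)}"

definition joined :: "int \<Rightarrow> int \<Rightarrow> tiling \<Rightarrow> int \<times> strand_kind \<Rightarrow> int \<times> strand_kind \<Rightarrow> bool" where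
  "joined a n D x y \<longleftrightarrow> x \<in> strands a n D \<and> y \<in> strands a n D \<and> x \<noteq> y
      \<and> strand_edges x \<inter> strand_edges y \<noteq> {}"

type_synonym pipe = "(int \<times> strand_kind) set"

definition pipes :: "int \<Rightarrow> int \<Rightarrow> tiling \<Rightarrow> pipe set" where
  "pipes a n D = (\<lambda>x. {y. (joined a n D)\<^sup>*\<^sup>* x y}) ` strands a n D"

definition pipe_edges :: "pipe \<Rightarrow> edge set" where
  "pipe_edges p = (\<Union>x\<in>p. strand_edges x)"

definition cross_at :: "tiling \<Rightarrow> pipe \<Rightarrow> pipe \<Rightarrow> int \<Rightarrow> bool" where
  "cross_at D p q c \<longleftrightarrow> D c = Cross \<and>
      (((c, SV) \<in> p \<and> (c, SH) \<in> q) \<or> ((c, SH) \<in> p \<and> (c, SV) \<in> q))"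

definition enters :: "int \<Rightarrow> int \<Rightarrow> pipe \<Rightarrow> bool" where
  "enters a n p \<longleftrightarrow> VE (n + 1) \<in> pipe_edges p \<or> (\<exists>c\<in>{a..n}. TE c \<in> pipe_edges p)"

definition exits :: "int \<Rightarrow> int \<Rightarrow> pipe \<Rightarrow> bool" where
  "exits a n p \<longleftrightarrow> VE a \<in> pipe_edges p \<or> (\<exists>c\<in>{a..n}. BE c \<in> pipe_edges p)"

definition is_BPD :: "int \<Rightarrow> int \<Rightarrow> tiling \<Rightarrow> bool" where
  "is_BPD a n D \<longleftrightarrow> consistent a n D
     \<and> (\<forall>p\<in>pipes a n D. \<forall>q\<in>pipes a n D. p \<noteq> q \<longrightarrow>
            card {c \<in> {a..n}. cross_at D p q c} \<le> 1)
     \<and> (\<forall>p\<in>pipes a n D. enters a n p \<and> exits a n p)"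

definition valid_labeling :: "int \<Rightarrow> int \<Rightarrow> tiling \<Rightarrow> (pipe \<Rightarrow> int) \<Rightarrow> bool" where
  "valid_labeling a n D L \<longleftrightarrow> inj_on L (pipes a n D)
     \<and> (\<forall>c\<in>{a..n}. D c = Cross \<longrightarrow>
          (\<forall>p\<in>pipes a n D. \<forall>q\<in>pipes a n D. (c, SV) \<in> p \<longrightarrow> (c, SH) \<in> q \<longrightarrow> L p < L q))"

text \<open>A pipe crosses edge e exactly when the boundary value there is non-empty,
  and then carries that label.  None encodes the empty value.\<close>
definition edge_cond :: "int \<Rightarrow> int \<Rightarrow> tiling \<Rightarrow> (pipe \<Rightarrow> int) \<Rightarrow> edge \<Rightarrow> int option \<Rightarrow> bool" where
  "edge_cond a n D L e g \<longleftrightarrow>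
     ((\<exists>p\<in>pipes a n D. e \<in> pipe_edges p) \<longleftrightarrow> g \<noteq> None)
     \<and> (\<forall>p\<in>pipes a n D. e \<in> pipe_edges p \<longrightarrow> g = Some (L p))"

text \<open>Boundary condition gamma = (gN, gE, gS, gW); gE and gW are the values at the single row 1.\<close>
definition satisfies ::
  "int \<Rightarrow> int \<Rightarrow> tiling \<Rightarrow> (int \<Rightarrow> int option) \<Rightarrow> int option \<Rightarrow> (int \<Rightarrow> int option) \<Rightarrow> int option \<Rightarrow> bool" where
  "satisfies a n D gN gE gS gW \<longleftrightarrow>
     (\<exists>L. valid_labeling a n D L
        \<and> edge_cond a n D L (VE (n + 1)) gE
        \<and> edge_cond a n D L (VE a) gW
        \<and> (\<forall>c\<in>{a..n}. edge_cond a n D L (TE c) (gN c))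
        \<and> (\<forall>c\<in>{a..n}. edge_cond a n D L (BE c) (gS c)))"

end

theory Submission
  imports Defs
begin


definition fsupp :: "(int \<Rightarrow> int) \<Rightarrow> int \<Rightarrow> int \<Rightarrow> bool" where
  "fsupp v A B \<longleftrightarrow> bij v \<and> (\<forall>x. x \<notin> {A..B} \<longrightarrow> v x = x)"

lemma fsupp_maps:
  assumes "fsupp v A B" "x \<in> {A..B}" shows "v x \<in> {A..B}"
proof (rule ccontr)
  assume "v x \<notin> {A..B}"
  then have "v (v x) = v x" using assms(1) unfolding fsupp_def by blast
  then have "v x = x" using assms(1) unfolding fsupp_def bij_def inj_def by blast
  then show False using assms(2) \<open>v x \<notin> {A..B}\<close> by simp
qed

lemma fsupp_inv_sub:
  assumes "fsupp v A B"
  shows "{(i,j). i < j \<and> v j < v i} \<subseteq> {A..B} \<times> {A..B}"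
proof clarify
  fix i j assume ij: "i < j" "v j < v i"
  have "i \<in> {A..B}"
  proof (rule ccontr)
    assume ni: "i \<notin> {A..B}"
    then have vi: "v i = i" using assms unfolding fsupp_def by blast
    show False
    proof (cases "j \<in> {A..B}")
      case True
      then have "v j \<in> {A..B}" using fsupp_maps[OF assms] by blast
      then show ?thesis using ni vi ij True by auto
    next
      case False
      then have "v j = j" using assms unfolding fsupp_def by blast
      then show ?thesis using vi ij by simp
    qed
  qed
  moreover have "j \<in> {A..B}"
  proof (rule ccontr)
    assume ni: "j \<notin> {A..B}"
    then have vj: "v j = j" using assms unfolding fsupp_def by blast
    show False
    proof (cases "i \<in> {A..B}")
      case True
      then have "v i \<in> {A..B}" using fsupp_maps[OF assms] by blast
      then show ?thesis using ni vj ij True by auto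
    next
      case False
      then have "v i = i" using assms unfolding fsupp_def by blast
      then show ?thesis using vj ij by simp
    qed
  qed
  ultimately show "i \<in> {A..B} \<and> j \<in> {A..B}" by simp
qed

definition gi :: "(int \<Rightarrow> int) \<Rightarrow> int \<Rightarrow> int \<Rightarrow> nat" where
  "gi v p q = (if p < q \<and> v q < v p then 1 else 0)"

lemma perm_length_sum:
  assumes "fsupp v A B"
  shows "perm_length v = (\<Sum>p\<in>{A..B}. \<Sum>q\<in>{A..B}. gi v p q)"
proof -
  have eq: "{(i,j). i < j \<and> v j < v i} = {x \<in> {A..B} \<times> {A..B}. gi v (fst x) (snd x) = 1}"
    using fsupp_inv_sub[OF assms] by (auto simp: gi_def split: if_splits)
  have "perm_length v = card {x \<in> {A..B} \<times> {A..B}. gi v (fst x) (snd x) = 1}"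
    unfolding perm_length_def eq ..
  also have "\<dots> = (\<Sum>x\<in>{A..B} \<times> {A..B}. gi v (fst x) (snd x))"
  proof -
    have "(\<Sum>x\<in>{A..B} \<times> {A..B}. gi v (fst x) (snd x))
        = (\<Sum>x\<in>{x \<in> {A..B} \<times> {A..B}. gi v (fst x) (snd x) = 1}. gi v (fst x) (snd x))"
      by (rule sum.mono_neutral_right) (auto simp: gi_def)
    also have "\<dots> = card {x \<in> {A..B} \<times> {A..B}. gi v (fst x) (snd x) = 1}" by simp
    finally show ?thesis by simp
  qed
  also have "\<dots> = (\<Sum>p\<in>{A..B}. \<Sum>q\<in>{A..B}. gi v p q)"
    by (simp only: sum.cartesian_product split_def)
  finally show ?thesis .
qed

lemma fsupp_transpose:
  assumes "fsupp v A B" "i \<in> {A..B}" "j \<in> {A..B}"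
  shows "fsupp (v \<circ> transpose i j) A B"
  using assms unfolding fsupp_def
  by (auto simp: bij_comp transpose_def)

lemma sum_split2:
  fixes F :: "int \<Rightarrow> nat"
  assumes "i \<in> S" "j \<in> S" "i \<noteq> j" "finite S"
  shows "(\<Sum>p\<in>S. F p) = F i + F j + (\<Sum>p\<in>S - {i,j}. F p)"
proof -
  have "S = insert i (insert j (S - {i,j}))" using assms by auto
  then have "(\<Sum>p\<in>S. F p) = (\<Sum>p\<in>insert i (insert j (S - {i,j})). F p)" by simp
  also have "\<dots> = F i + F j + (\<Sum>p\<in>S - {i,j}. F p)"
    using assms by (simp add: sum.insert_if)
  finally show ?thesis .
qed

lemma length_transpose_core:
  assumes fs: "fsupp v A B" and ij: "i < j" "i \<in> {A..B}" "j \<in> {A..B}" and vij: "v i < v j"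
  shows "perm_length (v \<circ> transpose i j) =
    perm_length v + 1 + 2 * card {p. i < p \<and> p < j \<and> v i < v p \<and> v p < v j}"
proof -
  let ?v' = "v \<circ> transpose i j"
  let ?X = "{A..B} - {i,j}"
  have injv: "inj v" using fs unfolding fsupp_def bij_def by blast
  have fs': "fsupp ?v' A B" using fsupp_transpose[OF fs ij(2,3)] .
  have neq: "i \<noteq> j" using ij by simp
  have decomp: "(\<Sum>p\<in>{A..B}. \<Sum>q\<in>{A..B}. gi f p q) =
      gi f i i + gi f i j + gi f j i + gi f j j
      + (\<Sum>x\<in>?X. gi f i x + gi f j x + gi f x i + gi f x j)
      + (\<Sum>p\<in>?X. \<Sum>q\<in>?X. gi f p q)" for f
  proof -
    have "(\<Sum>p\<in>{A..B}. \<Sum>q\<in>{A..B}. gi f p q) =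
        (\<Sum>p\<in>{A..B}. gi f p i + gi f p j + (\<Sum>q\<in>?X. gi f p q))"
      by (rule sum.cong[OF refl], rule sum_split2) (use ij neq in auto)
    also have "\<dots> = (gi f i i + gi f i j + (\<Sum>q\<in>?X. gi f i q))
        + (gi f j i + gi f j j + (\<Sum>q\<in>?X. gi f j q))
        + (\<Sum>p\<in>?X. gi f p i + gi f p j + (\<Sum>q\<in>?X. gi f p q))"
      by (rule sum_split2) (use ij neq in auto)
    also have "\<dots> = gi f i i + gi f i j + gi f j i + gi f j j
      + (\<Sum>x\<in>?X. gi f i x + gi f j x + gi f x i + gi f x j)
      + (\<Sum>p\<in>?X. \<Sum>q\<in>?X. gi f p q)"
      by (simp add: sum.distrib algebra_simps)
    finally show ?thesis .
  qed
  have same: "(\<Sum>p\<in>?X. \<Sum>q\<in>?X. gi ?v' p q) = (\<Sum>p\<in>?X. \<Sum>q\<in>?X. gi v p q)"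
    by (rule sum.cong[OF refl], rule sum.cong[OF refl]) (auto simp: gi_def transpose_def)
  have pt: "gi ?v' i x + gi ?v' j x + gi ?v' x i + gi ?v' x j =
      gi v i x + gi v j x + gi v x i + gi v x j + 2 * (if i < x \<and> x < j \<and> v i < v x \<and> v x < v j then 1 else 0)"
    if "x \<in> ?X" for x
  proof -
    have "x \<noteq> i" "x \<noteq> j" using that by auto
    then have "v x \<noteq> v i" "v x \<noteq> v j" using injv by (auto dest: injD)
    then show ?thesis using \<open>x \<noteq> i\<close> \<open>x \<noteq> j\<close> vij ij(1)
      by (auto simp: gi_def transpose_def)
  qed
  have s2: "(\<Sum>x\<in>?X. gi ?v' i x + gi ?v' j x + gi ?v' x i + gi ?v' x j) =
      (\<Sum>x\<in>?X. gi v i x + gi v j x + gi v x i + gi v x j) + 2 * card {p. i < p \<and> p < j \<and> v i < v p \<and> v p < v j}"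
  proof -
    have "(\<Sum>x\<in>?X. gi ?v' i x + gi ?v' j x + gi ?v' x i + gi ?v' x j) =
      (\<Sum>x\<in>?X. gi v i x + gi v j x + gi v x i + gi v x j) + 2 * (\<Sum>x\<in>?X. (if i < x \<and> x < j \<and> v i < v x \<and> v x < v j then 1 else 0))"
      using pt by (simp add: sum.distrib sum_distrib_left)
    also have "(\<Sum>x\<in>?X. (if i < x \<and> x < j \<and> v i < v x \<and> v x < v j then 1 else 0::nat)) =
        card {p. i < p \<and> p < j \<and> v i < v p \<and> v p < v j}"
    proof -
      have "{p. i < p \<and> p < j \<and> v i < v p \<and> v p < v j} = {x\<in>?X. i < x \<and> x < j \<and> v i < v x \<and> v x < v j}"
        using ij by auto
      then show ?thesis by (simp add: sum.inter_filter[symmetric])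
    qed
    finally show ?thesis .
  qed
  have e1: "gi ?v' i i = 0" "gi v i i = 0" "gi ?v' j j = 0" "gi v j j = 0"
     "gi ?v' j i = 0" "gi v j i = 0" "gi v i j = 0" "gi ?v' i j = 1"
    using ij vij by (auto simp: gi_def transpose_def)
  show ?thesis
    unfolding perm_length_sum[OF fs] perm_length_sum[OF fs'] decomp same s2 e1
    by simp
qed

lemma fsupp_widen: "fsupp v A B \<Longrightarrow> A' \<le> A \<Longrightarrow> B \<le> B' \<Longrightarrow> fsupp v A' B'"
  unfolding fsupp_def by auto

lemma length_transpose:
  assumes fs: "fsupp v A B" and ij: "i < j" and vij: "v i < v j"
  shows "perm_length (v \<circ> transpose i j) =
    perm_length v + 1 + 2 * card {p. i < p \<and> p < j \<and> v i < v p \<and> v p < v j}"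
proof -
  have "fsupp v (min A i) (max B j)" by (rule fsupp_widen[OF fs]) auto
  then show ?thesis by (rule length_transpose_core) (use ij vij in auto)
qed

lemma transpose_comp_twice: "(v \<circ> transpose i j) \<circ> transpose i j = v"
  by (auto simp: transpose_def)

lemma cover_iff:
  assumes fs: "fsupp v A B" and ij: "i < j"
  shows "perm_length (v \<circ> transpose i j) = perm_length v + 1 \<longleftrightarrow>
     (v i < v j \<and> (\<forall>p. i < p \<and> p < j \<longrightarrow> \<not> (v i < v p \<and> v p < v j)))"
proof
  assume len: "perm_length (v \<circ> transpose i j) = perm_length v + 1"
  have injv: "inj v" using fs unfolding fsupp_def bij_def by blast
  have "v i \<noteq> v j" using ij injv by (auto dest: injD)
  have lt: "v i < v j"
  proof (rule ccontr)
    assume "\<not> v i < v j"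
    then have "v j < v i" using \<open>v i \<noteq> v j\<close> by simp
    let ?v' = "v \<circ> transpose i j"
    have fs': "fsupp ?v' (min A i) (max B j)"
      by (rule fsupp_transpose, rule fsupp_widen[OF fs]) (use ij in auto)
    have "?v' i < ?v' j" using \<open>v j < v i\<close> by (simp add: transpose_def)
    from length_transpose[OF fs' ij this] have "perm_length v \<ge> perm_length ?v' + 1"
      unfolding transpose_comp_twice by linarith
    then show False using len by simp
  qed
  moreover have "card {p. i < p \<and> p < j \<and> v i < v p \<and> v p < v j} = 0"
    using length_transpose[OF fs ij lt] len by simp
  moreover have "finite {p. i < p \<and> p < j \<and> v i < v p \<and> v p < v j}"
    by (rule finite_subset[of _ "{i<..<j}"]) auto
  ultimately show "v i < v j \<and> (\<forall>p. i < p \<and> p < j \<longrightarrow> \<not> (v i < v p \<and> v p < v j))"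
    by auto
next
  assume h: "v i < v j \<and> (\<forall>p. i < p \<and> p < j \<longrightarrow> \<not> (v i < v p \<and> v p < v j))"
  then have e: "{p. i < p \<and> p < j \<and> v i < v p \<and> v p < v j} = {}" by auto
  show "perm_length (v \<circ> transpose i j) = perm_length v + 1"
    using length_transpose[OF fs ij conjunct1[OF h], unfolded e] by simp
qed




definition dec :: "int \<Rightarrow> int \<Rightarrow> (int \<Rightarrow> int) \<Rightarrow> bool" where
  "dec k n u \<longleftrightarrow> (\<forall>i j. k < i \<and> i < j \<and> j \<le> n \<longrightarrow> u j < u i)"

definition Cnd :: "int \<Rightarrow> int \<Rightarrow> (int \<Rightarrow> int) \<Rightarrow> (int \<Rightarrow> int) \<Rightarrow> bool" where
  "Cnd a k u w \<longleftrightarrow> (\<forall>l\<in>{a..k}. u l \<le> w l \<and> (\<forall>l'\<in>{a..k}. l' \<noteq> l \<longrightarrow> u l < w l \<longrightarrow>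
      (u l \<le> u l' \<and> u l' \<le> w l \<or> u l \<le> w l' \<and> w l' \<le> w l) \<longrightarrow>
      (u l' = w l' \<and> l' < l \<and> u l < u l' \<and> u l' < w l)))"

lemma Sperm_fsupp: "u \<in> Sperm a n \<Longrightarrow> fsupp u a n"
  unfolding Sperm_def fsupp_def by auto

locale kchain =
  fixes k :: int and s :: nat and V :: "nat \<Rightarrow> int \<Rightarrow> int" and I J :: "nat \<Rightarrow> int"
  assumes cov: "\<And>t. t < s \<Longrightarrow> kcover k (V t) (I t) (J t) (V (Suc t))"
    and srt: "\<And>t t'. t < t' \<Longrightarrow> t' < s \<Longrightarrow> V t (I t) < V t' (I t')"
    and fs0: "\<exists>A B. fsupp (V 0) A B"
begin

abbreviation "al t \<equiv> V t (I t)"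
abbreviation "be t \<equiv> V t (J t)"

lemma fsV: "t \<le> s \<Longrightarrow> \<exists>A B. fsupp (V t) A B"
proof (induction t)
  case 0 then show ?case using fs0 by simp
next
  case (Suc t)
  then obtain A B where fs: "fsupp (V t) A B" by auto
  have "V (Suc t) = V t \<circ> transpose (I t) (J t)" using cov[of t] Suc.prems unfolding kcover_def by auto
  moreover have "fsupp (V t \<circ> transpose (I t) (J t)) (min A (I t)) (max B (J t))"
    by (rule fsupp_transpose, rule fsupp_widen[OF fs]) (use cov[of t] Suc.prems in \<open>auto simp: kcover_def\<close>)
  ultimately show ?case by metis
qed

lemma stepv: "t < s \<Longrightarrow> V (Suc t) p = (if p = I t then V t (J t) else if p = J t then V t (I t) else V t p)"
  using cov[of t] unfolding kcover_def by (auto simp: transpose_def)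

lemma stepfacts:
  assumes "t < s"
  shows "I t < J t" "I t \<le> k" "k < J t" "al t < be t"
    "\<And>p. I t < p \<Longrightarrow> p < J t \<Longrightarrow> \<not> (al t < V t p \<and> V t p < be t)"
proof -
  have c: "I t \<le> k" "k < J t" "V (Suc t) = V t \<circ> transpose (I t) (J t)"
     "perm_length (V (Suc t)) = perm_length (V t) + 1"
    using cov[OF assms] unfolding kcover_def by auto
  then show "I t < J t" "I t \<le> k" "k < J t" by auto
  obtain A B where fs: "fsupp (V t) A B" using fsV assms by (meson less_imp_le_nat)
  have "al t < be t \<and> (\<forall>p. I t < p \<and> p < J t \<longrightarrow> \<not> (al t < V t p \<and> V t p < be t))"
    using cover_iff[OF fs, of "I t" "J t"] c by auto
  then show "al t < be t" "\<And>p. I t < p \<Longrightarrow> p < J t \<Longrightarrow> \<not> (al t < V t p \<and> V t p < be t)" by auto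
qed

lemma injV: "t \<le> s \<Longrightarrow> inj (V t)"
  using fsV unfolding fsupp_def bij_def by blast

lemma unchanged:
  assumes "t0 \<le> t" "t \<le> s" "\<And>t'. t0 \<le> t' \<Longrightarrow> t' < t \<Longrightarrow> p \<noteq> I t' \<and> p \<noteq> J t'"
  shows "V t p = V t0 p"
  using assms
proof (induction t)
  case 0 then show ?case by simp
next
  case (Suc t)
  show ?case
  proof (cases "t0 = Suc t")
    case True then show ?thesis by simp
  next
    case False
    then have "t0 \<le> t" using Suc.prems by simp
    then have "V t p = V t0 p" using Suc by auto
    moreover have "p \<noteq> I t \<and> p \<noteq> J t" using Suc.prems \<open>t0 \<le> t\<close> by auto
    ultimately show ?thesis using stepv[of t p] Suc.prems by auto
  qed
qed

lemma big_dec: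
  assumes "k < p" "t0 \<le> t" "t \<le> s"
  shows "V t p \<le> V t0 p"
  using assms
proof (induction t)
  case 0 then show ?case by simp
next
  case (Suc t)
  show ?case
  proof (cases "t0 = Suc t")
    case True then show ?thesis by simp
  next
    case False
    then have "t0 \<le> t" using Suc.prems by simp
    then have ih: "V t p \<le> V t0 p" using Suc by auto
    have "t < s" using Suc.prems by simp
    from stepfacts[OF this] have "V (Suc t) p \<le> V t p"
      using stepv[OF \<open>t < s\<close>, of p] \<open>k < p\<close> by auto
    then show ?thesis using ih by simp
  qed
qed

lemma small_inc:
  assumes "p \<le> k" "t0 \<le> t" "t \<le> s"
  shows "V t0 p \<le> V t p"
  using assms
proof (induction t)
  case 0 then show ?case by simp
next
  case (Suc t)
  show ?case
  proof (cases "t0 = Suc t")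
    case True then show ?thesis by simp
  next
    case False
    then have "t0 \<le> t" using Suc.prems by simp
    then have ih: "V t0 p \<le> V t p" using Suc by auto
    have "t < s" using Suc.prems by simp
    from stepfacts[OF this] have "V t p \<le> V (Suc t) p"
      using stepv[OF \<open>t < s\<close>, of p] \<open>p \<le> k\<close> by auto
    then show ?thesis using ih by simp
  qed
qed

lemma J_inj:
  assumes "t < t'" "t' < s" shows "J t \<noteq> J t'"
proof
  assume eq: "J t = J t'"
  have ts: "t < s" using assms by simp
  have "V (Suc t) (J t) = al t" using stepv[OF ts, of "J t"] stepfacts[OF ts] by auto
  moreover have "V t' (J t) \<le> V (Suc t) (J t)"
    using big_dec[of "J t" "Suc t" t'] stepfacts[OF ts] assms by auto
  moreover have "al t < al t'" using srt assms by simp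
  moreover have "al t' < be t'" using stepfacts[OF assms(2)] by simp
  ultimately show False using eq by simp
qed

lemma be_orig:
  assumes "t < s" shows "be t = V 0 (J t)"
proof (rule unchanged)
  fix t' assume "0 \<le> t'" "t' < t"
  then show "J t \<noteq> I t' \<and> J t \<noteq> J t'"
    using stepfacts[of t] stepfacts[of t'] J_inj[of t' t] assms by fastforce
qed (use assms in auto)

lemma fin_J:
  assumes "t < s" shows "V s (J t) = al t"
proof -
  have "V s (J t) = V (Suc t) (J t)"
  proof (rule unchanged)
    fix t' assume "Suc t \<le> t'" "t' < s"
    then show "J t \<noteq> I t' \<and> J t \<noteq> J t'"
      using stepfacts[of t] stepfacts[of t'] J_inj[of t t'] assms by fastforce
  qed (use assms in auto)
  also have "\<dots> = al t" using stepv[OF assms, of "J t"] stepfacts[OF assms] by auto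
  finally show ?thesis .
qed

lemma small_interval:
  assumes "p \<le> k" "t \<le> s" "V 0 p \<le> x" "x < V t p"
  shows "\<exists>t'<t. I t' = p \<and> al t' \<le> x \<and> x < be t'"
  using assms
proof (induction t)
  case 0 then show ?case by simp
next
  case (Suc t)
  have ts: "t < s" using Suc.prems by simp
  show ?case
  proof (cases "I t = p")
    case True
    then have "V (Suc t) p = be t" using stepv[OF ts, of p] by simp
    show ?thesis
    proof (cases "x < V t p")
      case True
      then obtain t' where "t' < t" "I t' = p \<and> al t' \<le> x \<and> x < be t'"
        using Suc.IH Suc.prems ts by auto
      then show ?thesis by (intro exI[of _ t']) auto
    next
      case False
      then show ?thesis using \<open>I t = p\<close> \<open>V (Suc t) p = be t\<close> Suc.prems by (intro exI[of _ t]) auto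
    qed
  next
    case False
    then have "V (Suc t) p = V t p" using stepv[OF ts, of p] stepfacts[OF ts] Suc.prems by auto
    then obtain t' where "t' < t" "I t' = p \<and> al t' \<le> x \<and> x < be t'"
        using Suc.IH Suc.prems ts by auto
    then show ?thesis by (intro exI[of _ t']) auto
  qed
qed

lemma small_val:
  assumes "p \<le> k" "t \<le> s"
  shows "V t p = V 0 p \<or> (\<exists>t'<t. I t' = p \<and> V t p = be t')"
  using assms
proof (induction t)
  case 0 then show ?case by simp
next
  case (Suc t)
  have ts: "t < s" using Suc.prems by simp
  show ?case
  proof (cases "I t = p")
    case True
    then show ?thesis using stepv[OF ts, of p] by auto
  next
    case False
    then have "V (Suc t) p = V t p" using stepv[OF ts, of p] stepfacts[OF ts] Suc.prems by auto
    then show ?thesis using Suc by fastforce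
  qed
qed

end


locale kchain2 = kchain +
  fixes a n :: int
  assumes ak: "a \<le> k" and kn: "k \<le> n"
    and u_S: "V 0 \<in> Sperm a n" and w_S: "V s \<in> Sperm a n"
    and u_dec: "dec k n (V 0)" and w_dec: "dec k n (V s)"
begin

lemma J_le_n: assumes "t < s" shows "J t \<le> n"
proof (rule ccontr)
  assume "\<not> J t \<le> n"
  then have "V s (J t) = J t" "V 0 (J t) = J t" using u_S w_S unfolding Sperm_def by auto
  then show False using fin_J[OF assms] be_orig[OF assms] stepfacts(4)[OF assms] by simp
qed

lemma J_mono:
  assumes "t < t'" "t' < s" shows "J t' < J t" "be t < be t'"
proof -
  have ts: "t < s" using assms by simp
  have "al t < al t'" using srt assms by simp
  then have lt: "V s (J t) < V s (J t')" using fin_J[OF ts] fin_J[OF assms(2)] by simp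
  have ne: "J t \<noteq> J t'" using J_inj[OF assms] .
  have r: "k < J t" "k < J t'" "J t \<le> n" "J t' \<le> n"
    using stepfacts(3)[OF ts] stepfacts(3)[OF assms(2)] J_le_n[OF ts] J_le_n[OF assms(2)] by auto
  show "J t' < J t"
  proof (rule ccontr)
    assume "\<not> J t' < J t"
    then have "J t < J t'" using ne by simp
    then have "V s (J t') < V s (J t)" using w_dec r unfolding dec_def by blast
    then show False using lt by simp
  qed
  then have "V 0 (J t) < V 0 (J t')" using u_dec r unfolding dec_def by blast
  then show "be t < be t'" using be_orig[OF ts] be_orig[OF assms(2)] by simp
qed

lemma consec:
  assumes "Suc t < s"
  shows "(I (Suc t) = I t \<and> al (Suc t) = be t) \<or> (I (Suc t) \<noteq> I t \<and> be t < al (Suc t))"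
proof (cases "I (Suc t) = I t")
  case True
  have ts: "t < s" using assms by simp
  then show ?thesis using True stepv[OF ts, of "I t"] by simp
next
  case False
  have ts: "t < s" using assms by simp
  let ?l = "I t" and ?l' = "I (Suc t)"
  have sf: "?l \<le> k" "k < J t" "?l' \<le> k" "k < J (Suc t)"
    using stepfacts[OF ts] stepfacts[OF assms] by auto
  have a1: "al (Suc t) = V t ?l'" using stepv[OF ts, of ?l'] False sf by auto
  have b1: "V (Suc t) ?l = be t" using stepv[OF ts, of ?l] by simp
  have "al (Suc t) \<noteq> be t"
  proof
    assume "al (Suc t) = be t"
    then have "V (Suc t) ?l' = V (Suc t) ?l" using b1 by simp
    then show False using injV[of "Suc t"] assms False by (auto dest: injD)
  qed
  moreover have "\<not> al (Suc t) < be t"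
  proof
    assume lt: "al (Suc t) < be t"
    have "al t < al (Suc t)" using srt[of t "Suc t"] assms by simp
    then have "\<not> (?l < ?l' \<and> ?l' < J t)" using stepfacts(5)[OF ts, of ?l'] a1 lt by auto
    then have "?l' < ?l" using sf False by auto
    moreover have "be t < be (Suc t)" using J_mono[of t "Suc t"] assms by simp
    ultimately show False using stepfacts(5)[OF assms, of ?l] b1 lt sf by auto
  qed
  ultimately show ?thesis using False by auto
qed

lemma be_al:
  assumes "t < t'" "t' < s"
  shows "be t \<le> al t' \<and> (be t = al t' \<longrightarrow> t' = Suc t \<and> I t' = I t)"
  using assms
proof (induction t')
  case 0 then show ?case by simp
next
  case (Suc t')
  show ?case
  proof (cases "t = t'")
    case True then show ?thesis using consec[of t] Suc.prems by auto
  next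
    case False
    then have "t < t'" using Suc.prems by simp
    then have ih: "be t \<le> al t'" using Suc by simp
    have "al t' < be t'" using stepfacts(4)[of t'] Suc.prems by simp
    moreover have "be t' \<le> al (Suc t')" using consec[of t'] Suc.prems by auto
    ultimately show ?thesis using ih by auto
  qed
qed

lemma hit_first:
  assumes "\<exists>t<s. I t = p" "p \<le> k"
  obtains t1 where "t1 < s" "I t1 = p" "al t1 = V 0 p"
proof -
  define t1 where "t1 = (LEAST t. t < s \<and> I t = p)"
  have h: "t1 < s \<and> I t1 = p" unfolding t1_def using assms(1) by (rule LeastI_ex)
  have "V t1 p = V 0 p"
  proof (rule unchanged)
    fix t' assume "0 \<le> t'" "t' < t1"
    then have "\<not> (t' < s \<and> I t' = p)" unfolding t1_def using not_less_Least by blast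
    then have "I t' \<noteq> p" using \<open>t' < t1\<close> h by simp
    moreover have "J t' \<noteq> p" using stepfacts(3)[of t'] \<open>t' < t1\<close> h assms(2) by auto
    ultimately show "p \<noteq> I t' \<and> p \<noteq> J t'" by auto
  qed (use h in auto)
  then show ?thesis using that h by auto
qed

lemma never_hit:
  assumes "\<not> (\<exists>t<s. I t = p)" "p \<le> k" "t \<le> s"
  shows "V t p = V 0 p"
proof (rule unchanged)
  fix t' assume "0 \<le> t'" "t' < t"
  then have "t' < s" using assms by simp
  then have "I t' \<noteq> p" "k < J t'" using assms(1) stepfacts(3)[of t'] by auto
  then show "p \<noteq> I t' \<and> p \<noteq> J t'" using assms(2) by auto
qed (use assms in auto)

lemma main_u:
  assumes l: "l \<in> {a..k}" and l': "l' \<in> {a..k}" "l' \<noteq> l" and nt: "V 0 l < V s l"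
    and x: "V 0 l \<le> V 0 l'" "V 0 l' \<le> V s l"
  shows "V 0 l' = V s l' \<and> l' < l \<and> V 0 l < V 0 l' \<and> V 0 l' < V s l"
proof -
  let ?x = "V 0 l'"
  have lk: "l \<le> k" "l' \<le> k" using l l' by auto
  have ne1: "?x \<noteq> V s l"
  proof
    assume eq: "?x = V s l"
    from small_val[OF lk(1), of s] consider "V s l = V 0 l" | t' where "t' < s" "V s l = be t'" by blast
    then show False
    proof cases
      case 1 then show False using nt by simp
    next
      case 2
      have "V 0 l' = V 0 (J t')" using eq 2 be_orig[OF 2(1)] by simp
      then have "l' = J t'" using injV[of 0] by (simp add: inj_eq)
      moreover have "k < J t'" using stepfacts(3)[OF 2(1)] .
      ultimately show False using lk by simp
    qed
  qed
  then have xl: "?x < V s l" using x by simp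
  obtain t where t: "t < s" "I t = l" "al t \<le> ?x" "?x < be t"
    using small_interval[OF lk(1), of s ?x] x(1) xl by blast
  show ?thesis
  proof (cases "\<exists>t<s. I t = l'")
    case True
    obtain t1 where t1: "t1 < s" "I t1 = l'" "al t1 = ?x" using hit_first[OF True lk(2)] by blast
    have "t1 \<noteq> t" using t(2) t1(2) l'(2) by metis
    then consider "t1 < t" | "t < t1" by linarith
    then show ?thesis
    proof cases
      case 1
      then have "be t1 \<le> al t" using be_al[OF 1 t(1)] by simp
      moreover have "al t1 < be t1" using stepfacts(4)[OF t1(1)] .
      ultimately show ?thesis using t(3) t1(3) by simp
    next
      case 2
      then have "be t \<le> al t1" using be_al[OF 2 t1(1)] by simp
      then show ?thesis using t(4) t1(3) by simp
    qed
  next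
    case False
    have w1: "V s l' = ?x" using never_hit[OF False lk(2), of s] by simp
    have w2: "V t l' = ?x" using never_hit[OF False lk(2), of t] t(1) by simp
    have "al t \<noteq> ?x"
    proof
      assume "al t = ?x"
      then have "V t l = V t l'" using w2 t(2) by simp
      then show False using injV[of t] t(1) l'(2) by (simp add: inj_eq)
    qed
    then have "al t < V t l'" using t(3) w2 by simp
    moreover have "V t l' < be t" using t(4) w2 by simp
    ultimately have "\<not> (l < l' \<and> l' < J t)" using stepfacts(5)[OF t(1), of l'] t(2) by blast
    moreover have "l' < J t" using stepfacts(3)[OF t(1)] lk(2) by simp
    ultimately have "l' < l" using l'(2) by linarith
    moreover have "V 0 l \<noteq> ?x" using injV[of 0] l'(2) by (simp add: inj_eq)
    ultimately show ?thesis using w1 x xl by simp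
  qed
qed

lemma main_w:
  assumes l: "l \<in> {a..k}" and l': "l' \<in> {a..k}" "l' \<noteq> l" and nt: "V 0 l < V s l"
    and x: "V 0 l \<le> V s l'" "V s l' \<le> V s l"
  shows "V 0 l' = V s l' \<and> l' < l \<and> V 0 l < V 0 l' \<and> V 0 l' < V s l"
proof -
  have lk: "l \<le> k" "l' \<le> k" using l l' by auto
  from small_val[OF lk(2), of s] consider "V s l' = V 0 l'" | t2 where "t2 < s" "I t2 = l'" "V s l' = be t2" by blast
  then show ?thesis
  proof cases
    case 1 then show ?thesis using main_u[OF l l' nt] x by simp
  next
    case 2
    have "V s l' \<noteq> V s l" using injV[of s] l'(2) by (simp add: inj_eq)
    then have xl: "V s l' < V s l" using x by simp
    have x0: "V 0 l \<le> V s l'" using x(1) .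
    obtain t where t: "t < s" "I t = l" "al t \<le> V s l'" "V s l' < be t"
      using small_interval[OF lk(1), of s "V s l'"] x0 xl by blast
    have "t2 \<noteq> t" using t(2) 2(2) l'(2) by metis
    then consider "t2 < t" | "t < t2" by linarith
    then show ?thesis
    proof cases
      case 1
      then have h: "be t2 \<le> al t \<and> (be t2 = al t \<longrightarrow> t = Suc t2 \<and> I t = I t2)" using be_al[OF 1 t(1)] by simp
      have "be t2 = al t" using h t(3) 2(3) by simp
      then have "I t = I t2" using h by blast
      then show ?thesis using t(2) 2(2) l'(2) by simp
    next
      case c: 2
      then have "be t \<le> al t2" using be_al[OF c 2(1)] by simp
      moreover have "al t2 < be t2" using stepfacts(4)[OF 2(1)] .
      ultimately show ?thesis using t(4) 2(3) by simp
    qed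
  qed
qed

lemma chain_Cnd: "Cnd a k (V 0) (V s)"
  unfolding Cnd_def
proof (intro ballI)
  fix l assume l: "l \<in> {a..k}"
  show "V 0 l \<le> V s l \<and> (\<forall>l'\<in>{a..k}. l' \<noteq> l \<longrightarrow> V 0 l < V s l \<longrightarrow>
      (V 0 l \<le> V 0 l' \<and> V 0 l' \<le> V s l \<or> V 0 l \<le> V s l' \<and> V s l' \<le> V s l) \<longrightarrow>
      (V 0 l' = V s l' \<and> l' < l \<and> V 0 l < V 0 l' \<and> V 0 l' < V s l))"
  proof (rule conjI)
    show "V 0 l \<le> V s l" using small_inc[of l 0 s] l by simp
    show "\<forall>l'\<in>{a..k}. l' \<noteq> l \<longrightarrow> V 0 l < V s l \<longrightarrow>
      (V 0 l \<le> V 0 l' \<and> V 0 l' \<le> V s l \<or> V 0 l \<le> V s l' \<and> V s l' \<le> V s l) \<longrightarrow>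
      (V 0 l' = V s l' \<and> l' < l \<and> V 0 l < V 0 l' \<and> V 0 l' < V s l)"
    proof (intro ballI impI)
      fix l' assume l': "l' \<in> {a..k}" "l' \<noteq> l" "V 0 l < V s l"
        "V 0 l \<le> V 0 l' \<and> V 0 l' \<le> V s l \<or> V 0 l \<le> V s l' \<and> V s l' \<le> V s l"
      from l'(4) show "V 0 l' = V s l' \<and> l' < l \<and> V 0 l < V 0 l' \<and> V 0 l' < V s l"
      proof
        assume "V 0 l \<le> V 0 l' \<and> V 0 l' \<le> V s l"
        then show ?thesis using main_u[OF l l'(1) l'(2) l'(3)] by simp
      next
        assume "V 0 l \<le> V s l' \<and> V s l' \<le> V s l"
        then show ?thesis using main_w[OF l l'(1) l'(2) l'(3)] by simp
      qed
    qed
  qed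
qed

end

lemma kpath_Cnd:
  assumes "a \<le> k" "k \<le> n" "u \<in> Sperm a n" "w \<in> Sperm a n" "dec k n u" "dec k n w"
    and "kpath k u w"
  shows "Cnd a k u w"
proof -
  obtain vs "is" js where vs: "vs \<noteq> []" "hd vs = u" "last vs = w"
        "length is = length vs - 1" "length js = length vs - 1"
        "\<forall>t < length vs - 1. kcover k (vs ! t) (is ! t) (js ! t) (vs ! (t + 1))"
        "sorted_wrt (<) (map (\<lambda>t. (vs ! t) (is ! t)) [0..<length vs - 1])"
    using assms(7) unfolding kpath_def by blast
  define s where "s = length vs - 1"
  interpret kchain k s "\<lambda>t. vs ! t" "\<lambda>t. is ! t" "\<lambda>t. js ! t"
  proof
    show "\<And>t. t < s \<Longrightarrow> kcover k (vs ! t) (is ! t) (js ! t) (vs ! Suc t)"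
      using vs(6) unfolding s_def by simp
    show "\<And>t t'. t < t' \<Longrightarrow> t' < s \<Longrightarrow> (vs ! t) (is ! t) < (vs ! t') (is ! t')"
      using vs(7) unfolding s_def sorted_wrt_iff_nth_less by auto
    have "vs ! 0 = u" using vs(1,2) hd_conv_nth[of vs] by simp
    then show "\<exists>A B. fsupp (vs ! 0) A B" using assms(3) Sperm_fsupp by blast
  qed
  have v0: "vs ! 0 = u" using vs(1,2) hd_conv_nth[of vs] by simp
  have vsw: "vs ! s = w" using vs(1,3) last_conv_nth[of vs] unfolding s_def by simp
  interpret kchain2 k s "\<lambda>t. vs ! t" "\<lambda>t. is ! t" "\<lambda>t. js ! t" a n
    by unfold_locales (use assms v0 vsw in auto)
  show ?thesis using chain_Cnd v0 vsw by simp
qed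




definition kpathB :: "int \<Rightarrow> int \<Rightarrow> (int \<Rightarrow> int) \<Rightarrow> (int \<Rightarrow> int) \<Rightarrow> bool" where
  "kpathB k \<theta> u w \<longleftrightarrow>
     (\<exists>vs is js. vs \<noteq> [] \<and> hd vs = u \<and> last vs = w
        \<and> length is = length vs - 1 \<and> length js = length vs - 1
        \<and> (\<forall>t < length vs - 1. kcover k (vs ! t) (is ! t) (js ! t) (vs ! (t + 1)))
        \<and> (\<forall>t t'. t < t' \<longrightarrow> t' < length vs - 1 \<longrightarrow> (vs ! t) (is ! t) < (vs ! t') (is ! t'))
        \<and> (\<forall>t < length vs - 1. \<theta> < (vs ! t) (is ! t)))"

lemma kpathB_kpath: "kpathB k \<theta> u w \<Longrightarrow> kpath k u w"
  unfolding kpathB_def kpath_def sorted_wrt_iff_nth_less by auto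

lemma kpathB_refl: "kpathB k \<theta> w w"
  unfolding kpathB_def by (rule exI[of _ "[w]"], rule exI[of _ "[]"], rule exI[of _ "[]"]) simp

lemma kpathB_cons:
  assumes c: "kcover k u i j v" and th: "\<theta> < u i" and p: "kpathB k (u i) v w"
  shows "kpathB k \<theta> u w"
proof -
  obtain vs "is" js where vs: "vs \<noteq> []" "hd vs = v" "last vs = w"
        "length is = length vs - 1" "length js = length vs - 1"
        "\<forall>t < length vs - 1. kcover k (vs ! t) (is ! t) (js ! t) (vs ! (t + 1))"
        "\<forall>t t'. t < t' \<longrightarrow> t' < length vs - 1 \<longrightarrow> (vs ! t) (is ! t) < (vs ! t') (is ! t')"
        "\<forall>t < length vs - 1. u i < (vs ! t) (is ! t)"
    using p unfolding kpathB_def by blast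
  have v0: "vs ! 0 = v" using vs(1,2) hd_conv_nth[of vs] by simp
  let ?vs = "u # vs" and ?is = "i # is" and ?js = "j # js"
  have L: "length ?vs - 1 = length vs" by simp
  have A: "\<forall>t < length ?vs - 1. kcover k (?vs ! t) (?is ! t) (?js ! t) (?vs ! (t + 1))"
  proof (intro allI impI)
    fix t assume "t < length ?vs - 1"
    then show "kcover k (?vs ! t) (?is ! t) (?js ! t) (?vs ! (t + 1))"
    proof (cases t)
      case 0 then show ?thesis using c v0 by simp
    next
      case (Suc t')
      then have "t' < length vs - 1" using \<open>t < length ?vs - 1\<close> by simp
      then show ?thesis using vs(6) Suc by simp
    qed
  qed
  have al: "(?vs ! t) (?is ! t) = (if t = 0 then u i else (vs ! (t - 1)) (is ! (t - 1)))" for t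
    by (cases t) auto
  have B: "\<forall>t t'. t < t' \<longrightarrow> t' < length ?vs - 1 \<longrightarrow> (?vs ! t) (?is ! t) < (?vs ! t') (?is ! t')"
  proof (intro allI impI)
    fix t t' assume tt: "t < t'" "t' < length ?vs - 1"
    then have t1: "t' - 1 < length vs - 1" by simp
    show "(?vs ! t) (?is ! t) < (?vs ! t') (?is ! t')"
    proof (cases "t = 0")
      case True
      then show ?thesis using al[of t] al[of t'] tt vs(8) t1 by simp
    next
      case False
      then have "t - 1 < t' - 1" using tt by simp
      then show ?thesis using al[of t] al[of t'] tt vs(7) t1 False by simp
    qed
  qed
  have C: "\<forall>t < length ?vs - 1. \<theta> < (?vs ! t) (?is ! t)"
  proof (intro allI impI)
    fix t assume t: "t < length ?vs - 1"
    show "\<theta> < (?vs ! t) (?is ! t)"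
    proof (cases "t = 0")
      case True then show ?thesis using th al[of t] by simp
    next
      case False
      then have "t - 1 < length vs - 1" using t by simp
      then have "u i < (vs ! (t - 1)) (is ! (t - 1))" using vs(8) by blast
      then show ?thesis using th al[of t] False by simp
    qed
  qed
  have D: "hd ?vs = u" "last ?vs = w" using vs(1,3) by auto
  show ?thesis unfolding kpathB_def
    by (rule exI[of _ ?vs], rule exI[of _ ?is], rule exI[of _ ?js]) (use A B C D vs(1,4,5) in auto)
qed

lemma Sperm_image: assumes "u \<in> Sperm a n" shows "u ` {a..n} = {a..n}"
proof
  show "u ` {a..n} \<subseteq> {a..n}" using fsupp_maps[OF Sperm_fsupp[OF assms]] by blast
  show "{a..n} \<subseteq> u ` {a..n}"
  proof
    fix y assume y: "y \<in> {a..n}"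
    have "surj u" using assms unfolding Sperm_def bij_def by blast
    then obtain x where x: "y = u x" by blast
    have "x \<in> {a..n}"
    proof (rule ccontr)
      assume "x \<notin> {a..n}"
      then have "u x = x" using assms unfolding Sperm_def by blast
      then show False using x y \<open>x \<notin> {a..n}\<close> by simp
    qed
    then show "y \<in> u ` {a..n}" using x by blast
  qed
qed

lemma Sperm_inj: "u \<in> Sperm a n \<Longrightarrow> inj u"
  unfolding Sperm_def bij_def by blast

lemma Sperm_big_image:
  assumes "u \<in> Sperm a n" "a \<le> k" "k \<le> n"
  shows "u ` {k<..n} = {a..n} - u ` {a..k}"
proof -
  have "{a..n} = {a..k} \<union> {k<..n}" using assms by auto
  then have "u ` {a..k} \<union> u ` {k<..n} = {a..n}" using Sperm_image[OF assms(1)] by (metis image_Un)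
  moreover have "u ` {a..k} \<inter> u ` {k<..n} = {}" using Sperm_inj[OF assms(1)]
    by (auto simp: inj_eq)
  ultimately show ?thesis by blast
qed

lemma decD: "dec k n u \<Longrightarrow> k < i \<Longrightarrow> i < j \<Longrightarrow> j \<le> n \<Longrightarrow> u j < u i"
  unfolding dec_def by blast

lemma dec_unique:
  assumes u: "u \<in> Sperm a n" and w: "w \<in> Sperm a n" and du: "dec k n u" and dw: "dec k n w"
    and ak: "a \<le> k" and kn: "k \<le> n" and eq: "\<forall>l\<in>{a..k}. u l = w l"
  shows "u = w"
proof
  fix x
  have X: "u ` {k<..n} = w ` {k<..n}"
  proof -
    have "u ` {a..k} = w ` {a..k}" using eq by (auto simp: image_def)
    then show ?thesis using Sperm_big_image[OF u ak kn] Sperm_big_image[OF w ak kn] by simp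
  qed
  have cnt: "card {y \<in> f ` {k<..n}. y > f p} = card {k<..<p}"
    if f: "f \<in> Sperm a n" "dec k n f" and p: "p \<in> {k<..n}" for f p
  proof -
    have "{y \<in> f ` {k<..n}. y > f p} = f ` {k<..<p}"
    proof
      show "{y \<in> f ` {k<..n}. y > f p} \<subseteq> f ` {k<..<p}"
      proof
        fix y assume "y \<in> {y \<in> f ` {k<..n}. y > f p}"
        then obtain q where q: "q \<in> {k<..n}" "y = f q" "f q > f p" by auto
        have "q < p"
        proof (rule ccontr)
          assume "\<not> q < p"
          then have "p = q \<or> p < q" by auto
          then show False
          proof
            assume "p = q" then show False using q by simp
          next
            assume "p < q" then have "f q < f p" using decD[OF f(2)] p q by simp
            then show False using q by simp
          qed
        qed
        then show "y \<in> f ` {k<..<p}" using q by auto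
      qed
      show "f ` {k<..<p} \<subseteq> {y \<in> f ` {k<..n}. y > f p}"
      proof
        fix y assume "y \<in> f ` {k<..<p}"
        then obtain q where q: "q \<in> {k<..<p}" "y = f q" by auto
        then have "f p < f q" using decD[OF f(2)] p by simp
        then show "y \<in> {y \<in> f ` {k<..n}. y > f p}" using q p by auto
      qed
    qed
    moreover have "inj_on f {k<..<p}" by (rule inj_on_subset[OF Sperm_inj[OF f(1)]]) simp
    ultimately show ?thesis by (simp add: card_image)
  qed
  show "u x = w x"
  proof (cases "x \<in> {a..n}")
    case False then show ?thesis using u w unfolding Sperm_def by auto
  next
    case True
    show ?thesis
    proof (cases "x \<le> k")
      case True then show ?thesis using eq \<open>x \<in> {a..n}\<close> by auto
    next
      case False
      then have p: "x \<in> {k<..n}" using \<open>x \<in> {a..n}\<close> by auto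
      have c1: "card {y \<in> u ` {k<..n}. y > u x} = card {y \<in> u ` {k<..n}. y > w x}"
        using cnt[OF u du p] cnt[OF w dw p] X by simp
      show ?thesis
      proof (rule ccontr)
        assume ne: "u x \<noteq> w x"
        have fin: "finite {y \<in> u ` {k<..n}. y > f}" for f by simp
        have wx: "w x \<in> u ` {k<..n}" using X p by auto
        have ux: "u x \<in> u ` {k<..n}" using p by auto
        show False
        proof (cases "u x < w x")
          case True
          have "{y \<in> u ` {k<..n}. y > w x} \<subset> {y \<in> u ` {k<..n}. y > u x}"
            using True wx by auto
          then have "card {y \<in> u ` {k<..n}. y > w x} < card {y \<in> u ` {k<..n}. y > u x}"
            by (rule psubset_card_mono[OF fin])
          then show False using c1 by simp
        next
          case False
          then have "w x < u x" using ne by simp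
          have "{y \<in> u ` {k<..n}. y > u x} \<subset> {y \<in> u ` {k<..n}. y > w x}"
            using \<open>w x < u x\<close> ux by auto
          then have "card {y \<in> u ` {k<..n}. y > u x} < card {y \<in> u ` {k<..n}. y > w x}"
            by (rule psubset_card_mono[OF fin])
          then show False using c1 by simp
        qed
      qed
    qed
  qed
qed

lemma CndD:
  assumes "Cnd a k u w" "l \<in> {a..k}" "l' \<in> {a..k}" "l' \<noteq> l" "u l < w l"
    "u l \<le> u l' \<and> u l' \<le> w l \<or> u l \<le> w l' \<and> w l' \<le> w l"
  shows "u l' = w l' \<and> l' < l \<and> u l < u l' \<and> u l' < w l"
  using assms unfolding Cnd_def by blast

lemma Cnd_disj:
  assumes C: "Cnd a k u w" and l: "l \<in> {a..k}" "u l < w l" and l': "l' \<in> {a..k}" "u l' < w l'"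
    and x: "u l \<le> x" "x \<le> w l" "u l' \<le> x" "x \<le> w l'"
  shows "l = l'"
proof (rule ccontr)
  assume ne: "l \<noteq> l'"
  show False
  proof (cases "u l \<le> u l'")
    case True
    then have "u l \<le> u l' \<and> u l' \<le> w l \<or> u l \<le> w l' \<and> w l' \<le> w l" using x by linarith
    then have "u l' = w l'" using CndD[OF C l(1) l'(1) _ l(2)] ne by blast
    then show False using l' by simp
  next
    case False
    then have "u l' \<le> u l \<and> u l \<le> w l' \<or> u l' \<le> w l \<and> w l \<le> w l'" using x by linarith
    then have "u l = w l" using CndD[OF C l'(1) l(1) _ l'(2)] ne by blast
    then show False using l by simp
  qed
qed

lemma CndD0: "Cnd a k u w \<Longrightarrow> l \<in> {a..k} \<Longrightarrow> u l \<le> w l"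
  unfolding Cnd_def by blast

definition Rset :: "int \<Rightarrow> int \<Rightarrow> int \<Rightarrow> (int \<Rightarrow> int) \<Rightarrow> (int \<Rightarrow> int) \<Rightarrow> int set" where
  "Rset a k n u w = {c \<in> {a..n}. c \<notin> u ` {a..k} \<and> (\<forall>l\<in>{a..k}. \<not> (u l < c \<and> c \<le> w l))}"

definition Mset :: "int \<Rightarrow> int \<Rightarrow> int \<Rightarrow> (int \<Rightarrow> int) \<Rightarrow> (int \<Rightarrow> int) \<Rightarrow> int set" where
  "Mset a k n u w = {c \<in> {a..n}. \<exists>l\<in>{a..k}. u l \<le> c \<and> c < w l}"


locale stp =
  fixes a k n :: int and u w :: "int \<Rightarrow> int" and l0 j \<beta> :: int
  assumes ak: "a \<le> k" and kn: "k \<le> n" and uS: "u \<in> Sperm a n" and wS: "w \<in> Sperm a n"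
    and ud: "dec k n u" and C: "Cnd a k u w" and l0: "l0 \<in> {a..k}" and nt: "u l0 < w l0"
    and mn: "\<forall>l\<in>{a..k}. u l < w l \<longrightarrow> u l0 \<le> u l"
    and jk: "k < j" and jn: "j \<le> n" and uj: "u j = \<beta>" and b1: "u l0 < \<beta>" and b2: "\<beta> \<le> w l0"
    and b3: "\<beta> \<notin> u ` {a..k}" and gap: "\<forall>x. u l0 < x \<and> x < \<beta> \<longrightarrow> x \<in> u ` {a..k}"
begin

definition "u' = u \<circ> transpose l0 j"

lemma l0j: "l0 < j" "l0 \<noteq> j" "l0 \<le> k" "a \<le> l0" using l0 jk by auto

lemma u'_l0: "u' l0 = \<beta>" unfolding u'_def using l0j uj by simp
lemma u'_j: "u' j = u l0" unfolding u'_def using l0j by simp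
lemma u'_other: "x \<noteq> l0 \<Longrightarrow> x \<noteq> j \<Longrightarrow> u' x = u x" unfolding u'_def by simp

lemma injU: "inj u" using Sperm_inj[OF uS] .

lemma u'S: "u' \<in> Sperm a n"
proof -
  have "bij u" using uS unfolding Sperm_def by blast
  then have "bij u'" unfolding u'_def by (simp add: bij_comp)
  moreover have "\<forall>t. t \<notin> {a..n} \<longrightarrow> u' t = t"
  proof (intro allI impI)
    fix t assume t: "t \<notin> {a..n}"
    then have "t \<noteq> l0" "t \<noteq> j" using l0j jn kn by auto
    then show "u' t = t" using u'_other uS t unfolding Sperm_def by auto
  qed
  ultimately show ?thesis unfolding Sperm_def by blast
qed

lemma injU': "inj u'" using Sperm_inj[OF u'S] .

lemma small_in: "l \<in> {a..k} \<Longrightarrow> u l \<in> {a..n}"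
  using Sperm_image[OF uS] kn by auto

lemma cover: "kcover k u l0 j u'"
proof -
  have "perm_length (u \<circ> transpose l0 j) = perm_length u + 1"
  proof (subst cover_iff[OF Sperm_fsupp[OF uS] l0j(1)], intro conjI allI impI notI)
    show "u l0 < u j" using b1 uj by simp
    fix p assume p: "l0 < p \<and> p < j" and v: "u l0 < u p \<and> u p < u j"
    then have "u p \<in> u ` {a..k}" using gap uj by auto
    then obtain l' where l': "l' \<in> {a..k}" "u p = u l'" by auto
    then have "p = l'" using injU by (simp add: inj_eq)
    then have ne: "l' \<noteq> l0" using p by simp
    have "u l0 \<le> u l' \<and> u l' \<le> w l0" using v uj b2 \<open>u p = u l'\<close> by simp
    then have "l' < l0" using CndD[OF C l0 l'(1) ne nt] by blast
    then show False using p \<open>p = l'\<close> by simp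
  qed
  then show ?thesis unfolding kcover_def u'_def using l0j jk by simp
qed

lemma u'dec: "dec k n u'"
  unfolding dec_def
proof (intro allI impI)
  fix p q assume pq: "k < p \<and> p < q \<and> q \<le> n"
  have pl: "p \<noteq> l0" "q \<noteq> l0" using pq l0j by auto
  show "u' q < u' p"
  proof (cases "p = j")
    case True
    then have qj: "q \<noteq> j" using pq by simp
    have "u q < u j" using decD[OF ud] pq True by simp
    have "u q \<noteq> u l0" using injU pl by (simp add: inj_eq)
    have "u q \<notin> u ` {a..k}" using pq injU by (auto simp: inj_eq)
    then have "\<not> (u l0 < u q)" using gap \<open>u q < u j\<close> uj by auto
    then show ?thesis using True qj u'_j u'_other pl \<open>u q \<noteq> u l0\<close> by simp
  next
    case False
    show ?thesis
    proof (cases "q = j")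
      case True
      have "u j < u p" using decD[OF ud] pq True by simp
      then show ?thesis using True False u'_j u'_other pl b1 uj by simp
    next
      case False2: False
      then show ?thesis using False u'_other pl decD[OF ud] pq by simp
    qed
  qed
qed

lemma u'_le: "l \<in> {a..k} \<Longrightarrow> u l \<le> u' l"
  using u'_l0 u'_other b1 l0j jk by (cases "l = l0") auto

lemma u'_small: "l \<in> {a..k} \<Longrightarrow> l \<noteq> l0 \<Longrightarrow> u' l = u l"
  using u'_other jk by auto

lemma Cnd': "Cnd a k u' w"
  unfolding Cnd_def
proof (intro ballI)
  fix l assume l: "l \<in> {a..k}"
  show "u' l \<le> w l \<and> (\<forall>l'\<in>{a..k}. l' \<noteq> l \<longrightarrow> u' l < w l \<longrightarrow>
      (u' l \<le> u' l' \<and> u' l' \<le> w l \<or> u' l \<le> w l' \<and> w l' \<le> w l) \<longrightarrow>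
      (u' l' = w l' \<and> l' < l \<and> u' l < u' l' \<and> u' l' < w l))"
  proof (rule conjI)
    show "u' l \<le> w l"
      using l CndD0[OF C l] u'_l0 b2 u'_small by (cases "l = l0") auto
    show "\<forall>l'\<in>{a..k}. l' \<noteq> l \<longrightarrow> u' l < w l \<longrightarrow>
      (u' l \<le> u' l' \<and> u' l' \<le> w l \<or> u' l \<le> w l' \<and> w l' \<le> w l) \<longrightarrow>
      (u' l' = w l' \<and> l' < l \<and> u' l < u' l' \<and> u' l' < w l)"
    proof (intro ballI impI)
      fix l' assume l': "l' \<in> {a..k}" "l' \<noteq> l" "u' l < w l"
        and h: "u' l \<le> u' l' \<and> u' l' \<le> w l \<or> u' l \<le> w l' \<and> w l' \<le> w l"
      show "u' l' = w l' \<and> l' < l \<and> u' l < u' l' \<and> u' l' < w l"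
      proof (cases "l = l0")
        case True
        then have ul: "u' l = \<beta>" using u'_l0 by simp
        have ul': "u' l' = u l'" using u'_small l' True by simp
        have h': "u l0 \<le> u l' \<and> u l' \<le> w l0 \<or> u l0 \<le> w l' \<and> w l' \<le> w l0"
          using h ul ul' b1 True by auto
        have r: "u l' = w l' \<and> l' < l0 \<and> u l0 < u l' \<and> u l' < w l0"
          using CndD[OF C l0 l'(1) _ nt h'] l'(2) True by blast
        have "u l' \<noteq> \<beta>" using b3 l'(1) by auto
        moreover have "\<beta> \<le> u l'" using h ul ul' r by auto
        ultimately show ?thesis using r ul ul' True by simp
      next
        case False
        then have ul: "u' l = u l" using u'_small l by simp
        show ?thesis
        proof (cases "l' = l0")
          case True
          have ul': "u' l' = \<beta>" using True u'_l0 by simp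
          have ntl: "u l < w l" using l'(3) ul by simp
          from h show ?thesis
          proof
            assume hh: "u' l \<le> u' l' \<and> u' l' \<le> w l"
            have "l = l0"
              by (rule Cnd_disj[OF C l ntl l0 nt, of \<beta>]) (use hh ul ul' b1 b2 in auto)
            then show ?thesis using False by simp
          next
            assume hh: "u' l \<le> w l' \<and> w l' \<le> w l"
            have "l = l0"
              by (rule Cnd_disj[OF C l ntl l0 nt, of "w l0"]) (use hh ul True nt in auto)
            then show ?thesis using False by simp
          qed
        next
          case False2: False
          have ul': "u' l' = u l'" using u'_small l' False2 by simp
          show ?thesis using CndD[OF C l l'(1) l'(2)] h ul ul' l'(3) by simp
        qed
      qed
    qed
  qed
qed

lemma bound: "\<forall>l\<in>{a..k}. u' l < w l \<longrightarrow> u l0 < u' l"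
proof (intro ballI impI)
  fix l assume l: "l \<in> {a..k}" and lt: "u' l < w l"
  show "u l0 < u' l"
  proof (cases "l = l0")
    case True then show ?thesis using u'_l0 b1 by simp
  next
    case False
    then have "u' l = u l" using u'_small l by simp
    then have "u l0 \<le> u l" using mn l lt by simp
    moreover have "u l0 \<noteq> u l" using injU False by (simp add: inj_eq)
    ultimately show ?thesis using \<open>u' l = u l\<close> by simp
  qed
qed

lemma meas: "card (Mset a k n u' w) < card (Mset a k n u w)"
proof (rule psubset_card_mono)
  show "finite (Mset a k n u w)" unfolding Mset_def by simp
  have sub: "Mset a k n u' w \<subseteq> Mset a k n u w"
  proof
    fix c assume "c \<in> Mset a k n u' w"
    then obtain l where l: "c \<in> {a..n}" "l \<in> {a..k}" "u' l \<le> c" "c < w l" unfolding Mset_def by auto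
    then have "u l \<le> c" using u'_le[OF l(2)] by simp
    then show "c \<in> Mset a k n u w" unfolding Mset_def using l by auto
  qed
  have in1: "u l0 \<in> Mset a k n u w" unfolding Mset_def using small_in[OF l0] l0 nt by auto
  have in2: "u l0 \<notin> Mset a k n u' w"
  proof
    assume "u l0 \<in> Mset a k n u' w"
    then obtain l where l: "l \<in> {a..k}" "u' l \<le> u l0" "u l0 < w l" unfolding Mset_def by auto
    show False
    proof (cases "l = l0")
      case True then show False using l u'_l0 b1 by simp
    next
      case False
      then have "u l \<le> u l0" using l u'_small by simp
      then have "u l < w l" using l by simp
      have "l = l0" by (rule Cnd_disj[OF C l(1) \<open>u l < w l\<close> l0 nt, of "u l0"]) (use l \<open>u l \<le> u l0\<close> nt in auto)
      then show False using False by simp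
    qed
  qed
  show "Mset a k n u' w \<subset> Mset a k n u w" using sub in1 in2 by blast
qed

lemma u'img: "u' ` {a..k} = insert \<beta> (u ` {a..k} - {u l0})"
proof
  show "u' ` {a..k} \<subseteq> insert \<beta> (u ` {a..k} - {u l0})"
  proof
    fix y assume "y \<in> u' ` {a..k}"
    then obtain l where l: "l \<in> {a..k}" "y = u' l" by auto
    show "y \<in> insert \<beta> (u ` {a..k} - {u l0})"
    proof (cases "l = l0")
      case True then show ?thesis using l u'_l0 by simp
    next
      case False
      then have "y = u l" using l u'_small by simp
      moreover have "u l \<noteq> u l0" using injU False by (simp add: inj_eq)
      ultimately show ?thesis using l by auto
    qed
  qed
  show "insert \<beta> (u ` {a..k} - {u l0}) \<subseteq> u' ` {a..k}"
  proof
    fix y assume y: "y \<in> insert \<beta> (u ` {a..k} - {u l0})"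
    show "y \<in> u' ` {a..k}"
    proof (cases "y = \<beta>")
      case True then show ?thesis using u'_l0 l0 by force
    next
      case False
      then have "y \<in> u ` {a..k}" "y \<noteq> u l0" using y by auto
      then obtain l where l: "l \<in> {a..k}" "y = u l" by auto
      then have "l \<noteq> l0" using \<open>y \<noteq> u l0\<close> by auto
      then show ?thesis using u'_small[of l] l by force
    qed
  qed
qed

lemma fix_step:
  assumes IH: "fixset {k<..n} u' w = Rset a k n u' w"
  shows "fixset {k<..n} u w = Rset a k n u w"
proof -
  have ul0R: "u l0 \<in> Rset a k n u' w"
    unfolding Rset_def
  proof (intro CollectI conjI ballI)
    show "u l0 \<in> {a..n}" using small_in[OF l0] .
    show "u l0 \<notin> u' ` {a..k}" using u'img b1 by auto
    fix l assume l: "l \<in> {a..k}"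
    show "\<not> (u' l < u l0 \<and> u l0 \<le> w l)"
    proof
      assume h: "u' l < u l0 \<and> u l0 \<le> w l"
      show False
      proof (cases "l = l0")
        case True then show False using h u'_l0 b1 by simp
      next
        case False
        then have "u l < u l0" using h u'_small l by simp
        then have "l = l0" using Cnd_disj[OF C l(1) _ l0 nt, of "u l0"] h nt by simp
        then show False using False by simp
      qed
    qed
  qed
  then have "u l0 \<in> fixset {k<..n} u' w" using IH by simp
  then obtain t where t: "t \<in> {k<..n}" "u l0 = u' t" "u' t = w t" unfolding fixset_def by auto
  have "t = j" using t(2) u'_j injU' by (simp add: inj_eq)
  then have wj: "w j = u l0" using t by simp
  have F: "fixset {k<..n} u w = fixset {k<..n} u' w - {u l0}"
  proof
    show "fixset {k<..n} u w \<subseteq> fixset {k<..n} u' w - {u l0}"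
    proof
      fix x assume "x \<in> fixset {k<..n} u w"
      then obtain t where t: "t \<in> {k<..n}" "x = u t" "u t = w t" unfolding fixset_def by auto
      have "t \<noteq> j" using t wj uj b1 by auto
      moreover have "t \<noteq> l0" using t l0j by auto
      ultimately have "u' t = u t" using u'_other by simp
      moreover have "u t \<noteq> u l0" using \<open>t \<noteq> l0\<close> injU by (simp add: inj_eq)
      ultimately have "x = u' t \<and> t \<in> {k<..n} \<and> u' t = w t" "x \<noteq> u l0" using t by auto
      then show "x \<in> fixset {k<..n} u' w - {u l0}" unfolding fixset_def by blast
    qed
    show "fixset {k<..n} u' w - {u l0} \<subseteq> fixset {k<..n} u w"
    proof
      fix x assume x: "x \<in> fixset {k<..n} u' w - {u l0}"
      then obtain t where t: "t \<in> {k<..n}" "x = u' t" "u' t = w t" unfolding fixset_def by auto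
      have "t \<noteq> j" using t x u'_j by auto
      moreover have "t \<noteq> l0" using t l0j by auto
      ultimately have "u' t = u t" using u'_other by simp
      then show "x \<in> fixset {k<..n} u w" unfolding fixset_def using t by auto
    qed
  qed
  have R: "Rset a k n u w = Rset a k n u' w - {u l0}"
  proof
    show "Rset a k n u w \<subseteq> Rset a k n u' w - {u l0}"
    proof
      fix c assume c: "c \<in> Rset a k n u w"
      then have c1: "c \<in> {a..n}" "c \<notin> u ` {a..k}" "\<forall>l\<in>{a..k}. \<not> (u l < c \<and> c \<le> w l)"
        unfolding Rset_def by auto
      have cl0: "c \<noteq> u l0" using c1(2) l0 by auto
      have cb: "c \<noteq> \<beta>" using c1(3) l0 b1 b2 by auto
      have "c \<notin> u' ` {a..k}" using u'img c1(2) cb by auto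
      moreover have "\<forall>l\<in>{a..k}. \<not> (u' l < c \<and> c \<le> w l)"
      proof (intro ballI notI)
        fix l assume l: "l \<in> {a..k}" "u' l < c \<and> c \<le> w l"
        show False
        proof (cases "l = l0")
          case True then show False using l c1(3) u'_l0 b1 by force
        next
          case False then show False using l c1(3) u'_small by force
        qed
      qed
      ultimately show "c \<in> Rset a k n u' w - {u l0}" unfolding Rset_def using c1 cl0 by auto
    qed
    show "Rset a k n u' w - {u l0} \<subseteq> Rset a k n u w"
    proof
      fix c assume c: "c \<in> Rset a k n u' w - {u l0}"
      then have c1: "c \<in> {a..n}" "c \<notin> u' ` {a..k}" "\<forall>l\<in>{a..k}. \<not> (u' l < c \<and> c \<le> w l)" "c \<noteq> u l0"
        unfolding Rset_def by auto
      have cS: "c \<notin> u ` {a..k}" using c1(2,4) u'img by auto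
      moreover have "\<forall>l\<in>{a..k}. \<not> (u l < c \<and> c \<le> w l)"
      proof (intro ballI notI)
        fix l assume l: "l \<in> {a..k}" "u l < c \<and> c \<le> w l"
        show False
        proof (cases "l = l0")
          case True
          have cb: "c \<noteq> \<beta>" using c1(2) u'img by auto
          show False
          proof (cases "c < \<beta>")
            case True2: True
            then show False using gap l True cS by auto
          next
            case False
            then have "\<beta> < c" using cb by simp
            then show False using c1(3) l0 u'_l0 l True by auto
          qed
        next
          case False then show False using l c1(3) u'_small by force
        qed
      qed
      ultimately show "c \<in> Rset a k n u w" unfolding Rset_def using c1 by auto
    qed
  qed
  show ?thesis using F R IH by simp
qed

end


lemma construct:
  assumes ak: "a \<le> k" and kn: "k \<le> n" and wS: "w \<in> Sperm a n" and wd: "dec k n w"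
  shows "u \<in> Sperm a n \<Longrightarrow> dec k n u \<Longrightarrow> Cnd a k u w \<Longrightarrow> (\<forall>l\<in>{a..k}. u l < w l \<longrightarrow> \<theta> < u l)
     \<Longrightarrow> kpathB k \<theta> u w \<and> fixset {k<..n} u w = Rset a k n u w"
proof (induction "card (Mset a k n u w)" arbitrary: u \<theta> rule: less_induct)
  case less
  note uS = less.prems(1) and ud = less.prems(2) and C = less.prems(3) and bd = less.prems(4)
  show ?case
  proof (cases "\<exists>l\<in>{a..k}. u l < w l")
    case False
    then have "\<forall>l\<in>{a..k}. u l = w l" using CndD0[OF C] by force
    then have uw: "u = w" using dec_unique[OF uS wS ud wd ak kn] by simp
    have "fixset {k<..n} w w = w ` {k<..n}" unfolding fixset_def by auto
    also have "\<dots> = {a..n} - w ` {a..k}" using Sperm_big_image[OF wS ak kn] .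
    also have "\<dots> = Rset a k n w w" unfolding Rset_def by auto
    finally show ?thesis using uw kpathB_refl by simp
  next
    case True
    define NT where "NT = {l\<in>{a..k}. u l < w l}"
    have NTne: "NT \<noteq> {}" using True unfolding NT_def by auto
    have "finite NT" unfolding NT_def by (rule finite_subset[of _ "{a..k}"]) auto
    note NTne = NTne this
    define m where "m = Min (u ` NT)"
    have "m \<in> u ` NT" unfolding m_def using NTne by simp
    then obtain l0 where l0: "l0 \<in> NT" "u l0 = m" by auto
    have mn: "\<forall>l\<in>{a..k}. u l < w l \<longrightarrow> u l0 \<le> u l"
      using l0 NTne unfolding m_def NT_def by auto
    have l0k: "l0 \<in> {a..k}" "u l0 < w l0" using l0 unfolding NT_def by auto
    define B where "B = {x \<in> {u l0<..w l0}. x \<notin> u ` {a..k}}"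
    have wB: "w l0 \<in> B"
    proof -
      have "w l0 \<notin> u ` {a..k}"
      proof
        assume "w l0 \<in> u ` {a..k}"
        then obtain l' where l': "l' \<in> {a..k}" "w l0 = u l'" by auto
        then have "l' \<noteq> l0" using l0k by auto
        then have "u l' < w l0" using CndD[OF C l0k(1) l'(1) _ l0k(2)] l' l0k by auto
        then show False using l' by simp
      qed
      then show ?thesis unfolding B_def using l0k by auto
    qed
    have finB: "finite B" unfolding B_def by (rule finite_subset[of _ "{u l0<..w l0}"]) auto
    define \<beta> where "\<beta> = Min B"
    have bB: "\<beta> \<in> B" unfolding \<beta>_def using finB wB by (intro Min_in) auto
    have bmin: "\<And>x. x \<in> B \<Longrightarrow> \<beta> \<le> x" unfolding \<beta>_def using finB by simp
    have b: "u l0 < \<beta>" "\<beta> \<le> w l0" "\<beta> \<notin> u ` {a..k}" using bB unfolding B_def by auto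
    have gap: "\<forall>x. u l0 < x \<and> x < \<beta> \<longrightarrow> x \<in> u ` {a..k}"
    proof (intro allI impI)
      fix x assume x: "u l0 < x \<and> x < \<beta>"
      show "x \<in> u ` {a..k}"
      proof (rule ccontr)
        assume "x \<notin> u ` {a..k}"
        then have "x \<in> B" unfolding B_def using x b by auto
        then show False using bmin x by force
      qed
    qed
    have bn: "\<beta> \<in> {a..n}"
    proof -
      have "u l0 \<in> {a..n}" "w l0 \<in> {a..n}"
        using Sperm_image[OF uS] Sperm_image[OF wS] l0k kn by auto
      then show ?thesis using b by auto
    qed
    then obtain j where j: "j \<in> {a..n}" "u j = \<beta>" using Sperm_image[OF uS] by (metis imageE)
    have "j \<notin> {a..k}" using j b(3) by auto
    then have jk: "k < j" "j \<le> n" using j by auto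
    interpret stp a k n u w l0 j \<beta>
      by unfold_locales (use ak kn uS wS ud C l0k mn jk j b gap in auto)
    have lt: "card (Mset a k n u' w) < card (Mset a k n u w)" using meas .
    have IH: "kpathB k (u l0) u' w \<and> fixset {k<..n} u' w = Rset a k n u' w"
      using less.hyps[OF lt u'S u'dec Cnd' bound] .
    have "kpathB k \<theta> u w"
      by (rule kpathB_cons[OF cover]) (use bd l0k IH in auto)
    moreover have "fixset {k<..n} u w = Rset a k n u w" using fix_step IH by simp
    ultimately show ?thesis by simp
  qed
qed




section \<open>Generic facts about pipes\<close>

lemma joined_sym: "joined a n D x y \<Longrightarrow> joined a n D y x"
  unfolding joined_def by blast

lemma rtr_sym: "(joined a n D)\<^sup>*\<^sup>* x y \<Longrightarrow> (joined a n D)\<^sup>*\<^sup>* y x"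
proof (induction rule: rtranclp_induct)
  case base then show ?case by simp
next
  case (step y z)
  then show ?case using joined_sym converse_rtranclp_into_rtranclp by metis
qed

lemma rtr_strands: "(joined a n D)\<^sup>*\<^sup>* x y \<Longrightarrow> x \<in> strands a n D \<Longrightarrow> y \<in> strands a n D"
  by (induction rule: rtranclp_induct) (auto simp: joined_def)

definition pcomp :: "int \<Rightarrow> int \<Rightarrow> tiling \<Rightarrow> int \<times> strand_kind \<Rightarrow> pipe" where
  "pcomp a n D x = {y. (joined a n D)\<^sup>*\<^sup>* x y}"

lemma comp_in_pipes: "x \<in> strands a n D \<Longrightarrow> pcomp a n D x \<in> pipes a n D"
  unfolding pcomp_def pipes_def by blast

lemma comp_self: "x \<in> pcomp a n D x"
  unfolding pcomp_def by simp

lemma pipesE: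
  assumes "p \<in> pipes a n D"
  obtains x where "x \<in> strands a n D" "p = pcomp a n D x"
  using assms unfolding pipes_def pcomp_def by blast

lemma pipe_strands: "p \<in> pipes a n D \<Longrightarrow> y \<in> p \<Longrightarrow> y \<in> strands a n D"
  by (elim pipesE) (auto simp: pcomp_def intro: rtr_strands)

lemma pipe_eq_comp: "p \<in> pipes a n D \<Longrightarrow> y \<in> p \<Longrightarrow> p = pcomp a n D y"
proof (elim pipesE)
  fix x assume x: "x \<in> strands a n D" "p = pcomp a n D x" and y: "y \<in> p"
  then have xy: "(joined a n D)\<^sup>*\<^sup>* x y" unfolding pcomp_def by simp
  show "p = pcomp a n D y"
    unfolding x(2) pcomp_def
  proof (intro Collect_cong iffI)
    fix z assume "(joined a n D)\<^sup>*\<^sup>* x z"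
    then show "(joined a n D)\<^sup>*\<^sup>* y z" using rtr_sym[OF xy] by (meson rtranclp_trans)
  next
    fix z assume "(joined a n D)\<^sup>*\<^sup>* y z"
    then show "(joined a n D)\<^sup>*\<^sup>* x z" using xy by (meson rtranclp_trans)
  qed
qed

lemma ex_pipe_edge: "(\<exists>p\<in>pipes a n D. e \<in> pipe_edges p) \<longleftrightarrow> (\<exists>x\<in>strands a n D. e \<in> strand_edges x)"
proof
  assume "\<exists>p\<in>pipes a n D. e \<in> pipe_edges p"
  then obtain p y where "p \<in> pipes a n D" "y \<in> p" "e \<in> strand_edges y" unfolding pipe_edges_def by blast
  then show "\<exists>x\<in>strands a n D. e \<in> strand_edges x" using pipe_strands by blast
next
  assume "\<exists>x\<in>strands a n D. e \<in> strand_edges x"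
  then obtain x where x: "x \<in> strands a n D" "e \<in> strand_edges x" by blast
  have "pcomp a n D x \<in> pipes a n D" using comp_in_pipes[OF x(1)] .
  moreover have "e \<in> pipe_edges (pcomp a n D x)" unfolding pipe_edges_def using comp_self[of x] x(2) by blast
  ultimately show "\<exists>p\<in>pipes a n D. e \<in> pipe_edges p" by blast
qed

lemma strands_iff: "(c, s) \<in> strands a n D \<longleftrightarrow> c \<in> {a..n} \<and> s \<in> tile_strands (D c)"
  unfolding strands_def by simp

lemma TE_strand: "TE e \<in> strand_edges (c, s) \<longleftrightarrow> c = e \<and> (s = SV \<or> s = SJ)"
  by (cases s) auto

lemma BE_strand: "BE e \<in> strand_edges (c, s) \<longleftrightarrow> c = e \<and> (s = SV \<or> s = SR)"
  by (cases s) auto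

lemma VE_strand: "VE e \<in> strand_edges (c, s) \<longleftrightarrow> (c = e \<and> (s = SH \<or> s = SJ)) \<or> (c + 1 = e \<and> (s = SH \<or> s = SR))"
  by (cases s) auto

lemma TE_used: "(\<exists>x\<in>strands a n D. TE e \<in> strand_edges x) \<longleftrightarrow> e \<in> {a..n} \<and> D e \<in> {Vert, Cross, JElb}"
proof -
  have "(\<exists>x\<in>strands a n D. TE e \<in> strand_edges x) \<longleftrightarrow> (\<exists>s. (e, s) \<in> strands a n D \<and> (s = SV \<or> s = SJ))"
  proof
    assume "\<exists>x\<in>strands a n D. TE e \<in> strand_edges x"
    then obtain x where x: "x \<in> strands a n D" "TE e \<in> strand_edges x" by blast
    obtain c s where cs: "x = (c, s)" by (cases x)
    then have "c = e \<and> (s = SV \<or> s = SJ)" using x(2) TE_strand by simp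
    then show "\<exists>s. (e, s) \<in> strands a n D \<and> (s = SV \<or> s = SJ)" using x(1) cs by blast
  next
    assume "\<exists>s. (e, s) \<in> strands a n D \<and> (s = SV \<or> s = SJ)"
    then obtain s where "(e, s) \<in> strands a n D" "s = SV \<or> s = SJ" by blast
    then show "\<exists>x\<in>strands a n D. TE e \<in> strand_edges x" using TE_strand[of e e s] by blast
  qed
  also have "\<dots> \<longleftrightarrow> e \<in> {a..n} \<and> D e \<in> {Vert, Cross, JElb}"
    unfolding strands_iff by (cases "D e") auto
  finally show ?thesis .
qed

lemma BE_used: "(\<exists>x\<in>strands a n D. BE e \<in> strand_edges x) \<longleftrightarrow> e \<in> {a..n} \<and> D e \<in> {Vert, Cross, RElb}"
proof -
  have "(\<exists>x\<in>strands a n D. BE e \<in> strand_edges x) \<longleftrightarrow> (\<exists>s. (e, s) \<in> strands a n D \<and> (s = SV \<or> s = SR))"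
  proof
    assume "\<exists>x\<in>strands a n D. BE e \<in> strand_edges x"
    then obtain x where x: "x \<in> strands a n D" "BE e \<in> strand_edges x" by blast
    obtain c s where cs: "x = (c, s)" by (cases x)
    then have "c = e \<and> (s = SV \<or> s = SR)" using x(2) BE_strand by simp
    then show "\<exists>s. (e, s) \<in> strands a n D \<and> (s = SV \<or> s = SR)" using x(1) cs by blast
  next
    assume "\<exists>s. (e, s) \<in> strands a n D \<and> (s = SV \<or> s = SR)"
    then obtain s where "(e, s) \<in> strands a n D" "s = SV \<or> s = SR" by blast
    then show "\<exists>x\<in>strands a n D. BE e \<in> strand_edges x" using BE_strand[of e e s] by blast
  qed
  also have "\<dots> \<longleftrightarrow> e \<in> {a..n} \<and> D e \<in> {Vert, Cross, RElb}"
    unfolding strands_iff by (cases "D e") auto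
  finally show ?thesis .
qed

lemma VE_used: "(\<exists>x\<in>strands a n D. VE e \<in> strand_edges x) \<longleftrightarrow>
    (e \<in> {a..n} \<and> uses_left (D e)) \<or> (e - 1 \<in> {a..n} \<and> uses_right (D (e - 1)))"
proof -
  have "(\<exists>x\<in>strands a n D. VE e \<in> strand_edges x) \<longleftrightarrow>
     (\<exists>s. (e, s) \<in> strands a n D \<and> (s = SH \<or> s = SJ)) \<or> (\<exists>s. (e - 1, s) \<in> strands a n D \<and> (s = SH \<or> s = SR))"
  proof
    assume "\<exists>x\<in>strands a n D. VE e \<in> strand_edges x"
    then obtain x where x: "x \<in> strands a n D" "VE e \<in> strand_edges x" by blast
    obtain c s where cs: "x = (c, s)" by (cases x)
    then have "(c = e \<and> (s = SH \<or> s = SJ)) \<or> (c + 1 = e \<and> (s = SH \<or> s = SR))" using x(2) VE_strand by simp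
    then show "(\<exists>s. (e, s) \<in> strands a n D \<and> (s = SH \<or> s = SJ)) \<or> (\<exists>s. (e - 1, s) \<in> strands a n D \<and> (s = SH \<or> s = SR))"
    proof
      assume "c = e \<and> (s = SH \<or> s = SJ)"
      then show ?thesis using x(1) cs by blast
    next
      assume h: "c + 1 = e \<and> (s = SH \<or> s = SR)"
      then have "c = e - 1" by simp
      then show ?thesis using x(1) cs h by blast
    qed
  next
    assume "(\<exists>s. (e, s) \<in> strands a n D \<and> (s = SH \<or> s = SJ)) \<or> (\<exists>s. (e - 1, s) \<in> strands a n D \<and> (s = SH \<or> s = SR))"
    then show "\<exists>x\<in>strands a n D. VE e \<in> strand_edges x"
    proof
      assume "\<exists>s. (e, s) \<in> strands a n D \<and> (s = SH \<or> s = SJ)"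
      then obtain s where "(e, s) \<in> strands a n D" "s = SH \<or> s = SJ" by blast
      then show ?thesis using VE_strand[of e e s] by blast
    next
      assume "\<exists>s. (e - 1, s) \<in> strands a n D \<and> (s = SH \<or> s = SR)"
      then obtain s where "(e - 1, s) \<in> strands a n D" "s = SH \<or> s = SR" by blast
      then show ?thesis using VE_strand[of e "e - 1" s] by auto
    qed
  qed
  also have "\<dots> \<longleftrightarrow> (e \<in> {a..n} \<and> uses_left (D e)) \<or> (e - 1 \<in> {a..n} \<and> uses_right (D (e - 1)))"
    unfolding strands_iff by (cases "D e"; cases "D (e - 1)") auto
  finally show ?thesis .
qed

section \<open>The canonical tiling\<close>

definition Tl :: "int \<Rightarrow> int \<Rightarrow> (int \<Rightarrow> int) \<Rightarrow> (int \<Rightarrow> int) \<Rightarrow> tiling" where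
  "Tl a k u w c = (if \<exists>l\<in>{a..k}. u l < w l \<and> c = u l then RElb
     else if \<exists>l\<in>{a..k}. u l < w l \<and> c = w l then JElb
     else if \<exists>l\<in>{a..k}. u l < c \<and> c < w l then (if c \<in> w ` {a..k} then Cross else Hor)
     else if c \<in> w ` {a..k} then Vert else Blank)"

fun inP :: "(int \<Rightarrow> int) \<Rightarrow> (int \<Rightarrow> int) \<Rightarrow> int \<Rightarrow> int \<times> strand_kind \<Rightarrow> bool" where
  "inP u w l (c, SV) = (u l = c \<and> w l = c)"
| "inP u w l (c, SR) = (u l = c \<and> u l < w l)"
| "inP u w l (c, SJ) = (w l = c \<and> u l < w l)"
| "inP u w l (c, SH) = (u l < c \<and> c < w l)"

lemma edge_span:
  assumes "inP u w l x"
  shows "(VE e \<in> strand_edges x \<longrightarrow> u l < e \<and> e \<le> w l) \<and> (TE e \<in> strand_edges x \<longrightarrow> w l = e)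
    \<and> (BE e \<in> strand_edges x \<longrightarrow> u l = e)"
proof -
  obtain c s where cs: "x = (c, s)" by (cases x)
  show ?thesis using assms unfolding cs by (cases s) auto
qed

locale ex_ctx =
  fixes a k n :: int and u w :: "int \<Rightarrow> int"
  assumes ak: "a \<le> k" and kn: "k \<le> n" and uS: "u \<in> Sperm a n" and wS: "w \<in> Sperm a n"
    and C: "Cnd a k u w"
begin

abbreviation "T \<equiv> Tl a k u w"

lemma injU: "inj u" using Sperm_inj[OF uS] .
lemma injW: "inj w" using Sperm_inj[OF wS] .

lemma u_in: "l \<in> {a..k} \<Longrightarrow> u l \<in> {a..n}" using Sperm_image[OF uS] kn by auto
lemma w_in: "l \<in> {a..k} \<Longrightarrow> w l \<in> {a..n}" using Sperm_image[OF wS] kn by auto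

lemma nt_u_ne_w:
  assumes l: "l \<in> {a..k}" "u l < w l" and l': "l' \<in> {a..k}" "u l' < w l'"
  shows "u l \<noteq> w l'"
proof
  assume eq: "u l = w l'"
  have "l = l'" by (rule Cnd_disj[OF C l l', of "u l"]) (use l l' eq in auto)
  then show False using eq l by simp
qed

lemma int_not_end:
  assumes "l \<in> {a..k}" "u l < c" "c < w l" "l' \<in> {a..k}" "u l' < w l'"
  shows "c \<noteq> u l'" "c \<noteq> w l'"
proof -
  have ntl: "u l < w l" using assms by simp
  show "c \<noteq> u l'"
  proof
    assume "c = u l'"
    then have "l = l'" using Cnd_disj[OF C assms(1) ntl assms(4,5), of c] assms by simp
    then show False using assms \<open>c = u l'\<close> by simp
  qed
  show "c \<noteq> w l'"
  proof
    assume "c = w l'"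
    then have "l = l'" using Cnd_disj[OF C assms(1) ntl assms(4,5), of c] assms by simp
    then show False using assms \<open>c = w l'\<close> by simp
  qed
qed

lemma T_R: "T c = RElb \<longleftrightarrow> (\<exists>l\<in>{a..k}. inP u w l (c, SR))"
  unfolding Tl_def by auto

lemma T_J: "T c = JElb \<longleftrightarrow> (\<exists>l\<in>{a..k}. inP u w l (c, SJ))"
proof
  assume "T c = JElb"
  then show "\<exists>l\<in>{a..k}. inP u w l (c, SJ)" unfolding Tl_def by (auto split: if_splits)
next
  assume "\<exists>l\<in>{a..k}. inP u w l (c, SJ)"
  then obtain l where l: "l \<in> {a..k}" "w l = c" "u l < w l" by auto
  have "\<not> (\<exists>l'\<in>{a..k}. u l' < w l' \<and> c = u l')"
  proof
    assume "\<exists>l'\<in>{a..k}. u l' < w l' \<and> c = u l'"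
    then obtain l' where l': "l' \<in> {a..k}" "u l' < w l'" "c = u l'" by blast
    have "u l' \<noteq> w l" by (rule nt_u_ne_w[OF l'(1,2) l(1) l(3)])
    then show False using l'(3) l(2) by simp
  qed
  then show "T c = JElb" unfolding Tl_def using l by auto
qed

lemma T_H: "T c \<in> {Hor, Cross} \<longleftrightarrow> (\<exists>l\<in>{a..k}. inP u w l (c, SH))"
proof
  assume "T c \<in> {Hor, Cross}"
  then show "\<exists>l\<in>{a..k}. inP u w l (c, SH)" unfolding Tl_def by (auto split: if_splits)
next
  assume "\<exists>l\<in>{a..k}. inP u w l (c, SH)"
  then obtain l where l: "l \<in> {a..k}" "u l < c" "c < w l" by auto
  have "\<not> (\<exists>l'\<in>{a..k}. u l' < w l' \<and> c = u l')" "\<not> (\<exists>l'\<in>{a..k}. u l' < w l' \<and> c = w l')"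
    using int_not_end[OF l] by auto
  then show "T c \<in> {Hor, Cross}" unfolding Tl_def using l by auto
qed

lemma T_V: "T c \<in> {Vert, Cross} \<longleftrightarrow> (\<exists>l\<in>{a..k}. inP u w l (c, SV))"
proof
  assume h: "T c \<in> {Vert, Cross}"
  then have "c \<in> w ` {a..k}" "\<not> (\<exists>l'\<in>{a..k}. u l' < w l' \<and> c = w l')"
    unfolding Tl_def by (auto split: if_splits)
  then obtain l where l: "l \<in> {a..k}" "c = w l" "\<not> u l < w l" by auto
  then have "u l = w l" using CndD0[OF C l(1)] by simp
  then show "\<exists>l\<in>{a..k}. inP u w l (c, SV)" using l by auto
next
  assume "\<exists>l\<in>{a..k}. inP u w l (c, SV)"
  then obtain l where l: "l \<in> {a..k}" "u l = c" "w l = c" by auto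
  have "\<not> (\<exists>l'\<in>{a..k}. u l' < w l' \<and> c = u l')"
  proof
    assume "\<exists>l'\<in>{a..k}. u l' < w l' \<and> c = u l'"
    then obtain l' where "l' \<in> {a..k}" "u l' < w l'" "c = u l'" by auto
    then have "l' = l" using l injU by (simp add: inj_eq)
    then show False using l \<open>u l' < w l'\<close> by simp
  qed
  moreover have "\<not> (\<exists>l'\<in>{a..k}. u l' < w l' \<and> c = w l')"
  proof
    assume "\<exists>l'\<in>{a..k}. u l' < w l' \<and> c = w l'"
    then obtain l' where "l' \<in> {a..k}" "u l' < w l'" "c = w l'" by auto
    then have "l' = l" using l injW by (simp add: inj_eq)
    then show False using l \<open>u l' < w l'\<close> by simp
  qed
  moreover have "c \<in> w ` {a..k}" by (rule image_eqI[of _ _ l]) (use l in auto)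
  ultimately show "T c \<in> {Vert, Cross}" unfolding Tl_def by auto
qed

lemma strandsT: "(c, s) \<in> strands a n T \<longleftrightarrow> c \<in> {a..n} \<and> (\<exists>l\<in>{a..k}. inP u w l (c, s))"
proof -
  have "s \<in> tile_strands (T c) \<longleftrightarrow> (\<exists>l\<in>{a..k}. inP u w l (c, s))"
  proof (cases s)
    case SV
    have "SV \<in> tile_strands (T c) \<longleftrightarrow> T c \<in> {Vert, Cross}" by (cases "T c") auto
    then show ?thesis using T_V SV by simp
  next
    case SH
    have "SH \<in> tile_strands (T c) \<longleftrightarrow> T c \<in> {Hor, Cross}" by (cases "T c") auto
    then show ?thesis using T_H SH by simp
  next
    case SR
    have "SR \<in> tile_strands (T c) \<longleftrightarrow> T c = RElb" by (cases "T c") auto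
    then show ?thesis using T_R SR by simp
  next
    case SJ
    have "SJ \<in> tile_strands (T c) \<longleftrightarrow> T c = JElb" by (cases "T c") auto
    then show ?thesis using T_J SJ by simp
  qed
  then show ?thesis unfolding strands_iff by simp
qed

lemma inP_unique:
  assumes "l \<in> {a..k}" "l' \<in> {a..k}" "inP u w l x" "inP u w l' x"
  shows "l = l'"
proof -
  obtain c s where cs: "x = (c, s)" by (cases x)
  show ?thesis
  proof (cases s)
    case SV
    then have "u l = u l'" using assms cs by simp
    then show ?thesis using injD[OF injU] by blast
  next
    case SR
    then have "u l = u l'" using assms cs by simp
    then show ?thesis using injD[OF injU] by blast
  next
    case SJ
    then have "w l = w l'" using assms cs by simp
    then show ?thesis using injD[OF injW] by blast
  next
    case SH
    then have "u l < c" "c < w l" "u l' < c" "c < w l'" using assms cs by auto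
    then show ?thesis using Cnd_disj[OF C assms(1) _ assms(2), of c] by simp
  qed
qed

lemma joined_lab:
  assumes j: "joined a n T x y" and l: "l \<in> {a..k}" "inP u w l x" and l': "l' \<in> {a..k}" "inP u w l' y"
  shows "l = l'"
proof -
  obtain e where e: "e \<in> strand_edges x" "e \<in> strand_edges y" using j unfolding joined_def by blast
  show ?thesis
  proof (cases e)
    case (VE v)
    then have "u l < v \<and> v \<le> w l" "u l' < v \<and> v \<le> w l'"
      using edge_span[OF l(2)] edge_span[OF l'(2)] e by auto
    then show ?thesis using Cnd_disj[OF C l(1) _ l'(1), of v] by simp
  next
    case (TE v)
    then have "w l = w l'" using edge_span[OF l(2)] edge_span[OF l'(2)] e by auto
    then show ?thesis using injD[OF injW] by blast
  next
    case (BE v)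
    then have "u l = u l'" using edge_span[OF l(2)] edge_span[OF l'(2)] e by auto
    then show ?thesis using injD[OF injU] by blast
  qed
qed

definition P :: "int \<Rightarrow> pipe" where
  "P l = {y \<in> strands a n T. inP u w l y}"

lemma inP_strands: "l \<in> {a..k} \<Longrightarrow> inP u w l (c, s) \<Longrightarrow> (c, s) \<in> strands a n T"
proof -
  assume l: "l \<in> {a..k}" "inP u w l (c, s)"
  have "c \<in> {a..n}" using l u_in[OF l(1)] w_in[OF l(1)] by (cases "(u, w, l, (c, s))" rule: inP.cases) auto
  then show ?thesis using strandsT l by blast
qed

lemma uses_right_iff: "uses_right t \<longleftrightarrow> t \<in> {Hor, RElb, Cross}" by (cases t) auto
lemma uses_left_iff: "uses_left t \<longleftrightarrow> t \<in> {Hor, JElb, Cross}" by (cases t) auto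

lemma ur_T: "uses_right (T c) \<longleftrightarrow> (\<exists>l\<in>{a..k}. u l \<le> c \<and> c < w l)"
proof -
  have "uses_right (T c) \<longleftrightarrow> T c = RElb \<or> T c \<in> {Hor, Cross}" unfolding uses_right_iff by auto
  also have "\<dots> \<longleftrightarrow> (\<exists>l\<in>{a..k}. inP u w l (c, SR)) \<or> (\<exists>l\<in>{a..k}. inP u w l (c, SH))"
    using T_R T_H by simp
  also have "\<dots> \<longleftrightarrow> (\<exists>l\<in>{a..k}. u l \<le> c \<and> c < w l)" by force
  finally show ?thesis .
qed

lemma ul_T: "uses_left (T c) \<longleftrightarrow> (\<exists>l\<in>{a..k}. u l < c \<and> c \<le> w l)"
proof -
  have "uses_left (T c) \<longleftrightarrow> T c = JElb \<or> T c \<in> {Hor, Cross}" unfolding uses_left_iff by auto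
  also have "\<dots> \<longleftrightarrow> (\<exists>l\<in>{a..k}. inP u w l (c, SJ)) \<or> (\<exists>l\<in>{a..k}. inP u w l (c, SH))"
    using T_J T_H by simp
  also have "\<dots> \<longleftrightarrow> (\<exists>l\<in>{a..k}. u l < c \<and> c \<le> w l)" by force
  finally show ?thesis .
qed

lemma consT: "consistent a n T"
  unfolding consistent_def
proof (intro allI impI)
  fix c assume "a \<le> c \<and> c < n"
  have "(\<exists>l\<in>{a..k}. u l \<le> c \<and> c < w l) \<longleftrightarrow> (\<exists>l\<in>{a..k}. u l < c + 1 \<and> c + 1 \<le> w l)" by auto
  then show "uses_right (T c) \<longleftrightarrow> uses_left (T (c + 1))" using ur_T ul_T by simp
qed

definition hs :: "int \<Rightarrow> int \<Rightarrow> int \<times> strand_kind" where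
  "hs l c = (if c = u l then (c, SR) else if c = w l then (c, SJ) else (c, SH))"

lemma hs_inP: "u l < w l \<Longrightarrow> u l \<le> c \<Longrightarrow> c \<le> w l \<Longrightarrow> inP u w l (hs l c)"
  unfolding hs_def by auto

lemma hs_strands: "l \<in> {a..k} \<Longrightarrow> u l < w l \<Longrightarrow> u l \<le> c \<Longrightarrow> c \<le> w l \<Longrightarrow> hs l c \<in> strands a n T"
  using hs_inP inP_strands by (metis hs_def)

lemma hs_joined:
  assumes l: "l \<in> {a..k}" "u l < w l" and c: "u l \<le> c" "c < w l"
  shows "joined a n T (hs l c) (hs l (c + 1))"
  unfolding joined_def
proof (intro conjI)
  show "hs l c \<in> strands a n T" "hs l (c + 1) \<in> strands a n T" using hs_strands l c by auto
  show "hs l c \<noteq> hs l (c + 1)" unfolding hs_def by auto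
  have "VE (c + 1) \<in> strand_edges (hs l c)" unfolding hs_def using c by auto
  moreover have "VE (c + 1) \<in> strand_edges (hs l (c + 1))" unfolding hs_def using c by auto
  ultimately show "strand_edges (hs l c) \<inter> strand_edges (hs l (c + 1)) \<noteq> {}" by blast
qed

lemma hs_reach:
  assumes l: "l \<in> {a..k}" "u l < w l"
  shows "u l + int m \<le> w l \<Longrightarrow> (joined a n T)\<^sup>*\<^sup>* (hs l (u l)) (hs l (u l + int m))"
proof (induction m)
  case 0 then show ?case by simp
next
  case (Suc m)
  then have "(joined a n T)\<^sup>*\<^sup>* (hs l (u l)) (hs l (u l + int m))" by simp
  moreover have "joined a n T (hs l (u l + int m)) (hs l (u l + int m + 1))"
    by (rule hs_joined[OF l]) (use Suc.prems in auto)
  ultimately have "(joined a n T)\<^sup>*\<^sup>* (hs l (u l)) (hs l (u l + int m + 1))" by (rule rtranclp.rtrancl_into_rtrancl)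
  moreover have "u l + int m + 1 = u l + int (Suc m)" by simp
  ultimately show ?case by metis
qed

lemma hs_of: "inP u w l x \<Longrightarrow> u l < w l \<Longrightarrow> x = hs l (fst x) \<and> u l \<le> fst x \<and> fst x \<le> w l"
proof -
  assume h: "inP u w l x" "u l < w l"
  obtain c s where cs: "x = (c, s)" by (cases x)
  show ?thesis using h unfolding cs hs_def by (cases s) auto
qed

lemma reach:
  assumes l: "l \<in> {a..k}" and x: "inP u w l x" and y: "inP u w l y"
  shows "(joined a n T)\<^sup>*\<^sup>* x y"
proof (cases "u l < w l")
  case False
  have "x = (u l, SV)"
  proof -
    obtain c s where cs: "x = (c, s)" by (cases x)
    show ?thesis using x False unfolding cs by (cases s) auto
  qed
  moreover have "y = (u l, SV)"
  proof -
    obtain c s where cs: "y = (c, s)" by (cases y)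
    show ?thesis using y False unfolding cs by (cases s) auto
  qed
  ultimately show ?thesis by simp
next
  case True
  have r: "(joined a n T)\<^sup>*\<^sup>* (hs l (u l)) z" if z: "inP u w l z" for z
  proof -
    have h: "z = hs l (fst z)" "u l \<le> fst z" "fst z \<le> w l" using hs_of[OF z True] by auto
    define m where "m = nat (fst z - u l)"
    have "fst z = u l + int m" unfolding m_def using h by simp
    then show ?thesis using hs_reach[OF l True, of m] h by simp
  qed
  show ?thesis using r[OF x] r[OF y] rtr_sym by (metis rtranclp_trans)
qed

lemma comp_T:
  assumes x: "x \<in> strands a n T" and l: "l \<in> {a..k}" "inP u w l x"
  shows "pcomp a n T x = P l"
proof
  show "pcomp a n T x \<subseteq> P l"
  proof
    fix y assume "y \<in> pcomp a n T x"
    then have "(joined a n T)\<^sup>*\<^sup>* x y" unfolding pcomp_def by simp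
    then show "y \<in> P l"
    proof (induction rule: rtranclp_induct)
      case base then show ?case unfolding P_def using x l by simp
    next
      case (step y z)
      then have zs: "z \<in> strands a n T" unfolding joined_def by simp
      obtain c s where cs: "z = (c, s)" by (cases z)
      then obtain l' where l': "l' \<in> {a..k}" "inP u w l' z" using zs strandsT by blast
      have "inP u w l y" using step.IH unfolding P_def by simp
      then have "l = l'" using joined_lab[OF step.hyps(2) l(1) _ l'] by simp
      then show ?case unfolding P_def using zs l' by simp
    qed
  qed
  show "P l \<subseteq> pcomp a n T x"
    unfolding P_def pcomp_def using reach[OF l] by auto
qed

definition xw :: "int \<Rightarrow> int \<times> strand_kind" where
  "xw l = (if u l = w l then (w l, SV) else (w l, SJ))"
definition xu :: "int \<Rightarrow> int \<times> strand_kind" where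
  "xu l = (if u l = w l then (u l, SV) else (u l, SR))"

lemma xw_props: "l \<in> {a..k} \<Longrightarrow> inP u w l (xw l) \<and> xw l \<in> strands a n T \<and> TE (w l) \<in> strand_edges (xw l)"
proof -
  assume l: "l \<in> {a..k}"
  have "u l \<le> w l" using CndD0[OF C l] .
  then have "inP u w l (xw l)" unfolding xw_def by auto
  moreover have "xw l \<in> strands a n T" using inP_strands[OF l] calculation by (metis xw_def)
  moreover have "TE (w l) \<in> strand_edges (xw l)" unfolding xw_def by simp
  ultimately show ?thesis by simp
qed

lemma xu_props: "l \<in> {a..k} \<Longrightarrow> inP u w l (xu l) \<and> xu l \<in> strands a n T \<and> BE (u l) \<in> strand_edges (xu l)"
proof -
  assume l: "l \<in> {a..k}"
  have "u l \<le> w l" using CndD0[OF C l] .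
  then have "inP u w l (xu l)" unfolding xu_def by auto
  moreover have "xu l \<in> strands a n T" using inP_strands[OF l] calculation by (metis xu_def)
  moreover have "BE (u l) \<in> strand_edges (xu l)" unfolding xu_def by simp
  ultimately show ?thesis by simp
qed

lemma pipes_T: "p \<in> pipes a n T \<longleftrightarrow> (\<exists>l\<in>{a..k}. p = P l)"
proof
  assume "p \<in> pipes a n T"
  then obtain x where x: "x \<in> strands a n T" "p = pcomp a n T x" by (elim pipesE)
  obtain c s where cs: "x = (c, s)" by (cases x)
  then obtain l where l: "l \<in> {a..k}" "inP u w l x" using x strandsT by blast
  then show "\<exists>l\<in>{a..k}. p = P l" using comp_T[OF x(1) l] x by blast
next
  assume "\<exists>l\<in>{a..k}. p = P l"
  then obtain l where l: "l \<in> {a..k}" "p = P l" by blast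
  then have "p = pcomp a n T (xw l)" using comp_T xw_props by metis
  then show "p \<in> pipes a n T" using comp_in_pipes xw_props l by metis
qed

lemma P_inj: "l \<in> {a..k} \<Longrightarrow> l' \<in> {a..k} \<Longrightarrow> P l = P l' \<Longrightarrow> l = l'"
proof -
  assume l: "l \<in> {a..k}" "l' \<in> {a..k}" "P l = P l'"
  have "xw l \<in> P l" unfolding P_def using xw_props[OF l(1)] by simp
  then have "inP u w l' (xw l)" using l(3) unfolding P_def by simp
  moreover have "inP u w l (xw l)" using xw_props[OF l(1)] by simp
  ultimately show "l = l'" using inP_unique[OF l(1,2)] by blast
qed

definition Lb :: "pipe \<Rightarrow> int" where
  "Lb p = (SOME l. l \<in> {a..k} \<and> p = P l)"

lemma Lb_P: "l \<in> {a..k} \<Longrightarrow> Lb (P l) = l"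
proof -
  assume l: "l \<in> {a..k}"
  have "\<exists>l'. l' \<in> {a..k} \<and> P l = P l'" using l by blast
  then have "Lb (P l) \<in> {a..k} \<and> P l = P (Lb (P l))" unfolding Lb_def by (rule someI_ex)
  then show ?thesis using P_inj l by metis
qed

lemma inP_P: "y \<in> P l \<Longrightarrow> inP u w l y \<and> y \<in> strands a n T" unfolding P_def by simp

end




context ex_ctx
begin

lemma SV_in_P: "(c, SV) \<in> P l \<Longrightarrow> c = u l \<and> u l = w l" unfolding P_def by auto
lemma SH_in_P: "(c, SH) \<in> P l \<Longrightarrow> u l < c \<and> c < w l" unfolding P_def by auto

lemma P_edges: "l \<in> {a..k} \<Longrightarrow> TE (w l) \<in> pipe_edges (P l) \<and> BE (u l) \<in> pipe_edges (P l)"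
proof -
  assume l: "l \<in> {a..k}"
  have "xw l \<in> P l" "xu l \<in> P l" unfolding P_def using xw_props[OF l] xu_props[OF l] by auto
  then show ?thesis unfolding pipe_edges_def using xw_props[OF l] xu_props[OF l] by blast
qed

lemma P_edge_span:
  assumes "e \<in> pipe_edges (P l)"
  shows "(e = VE v \<longrightarrow> u l < v \<and> v \<le> w l) \<and> (e = TE v \<longrightarrow> w l = v) \<and> (e = BE v \<longrightarrow> u l = v)"
proof -
  obtain y where y: "y \<in> P l" "e \<in> strand_edges y" using assms unfolding pipe_edges_def by blast
  then have "inP u w l y" unfolding P_def by simp
  then show ?thesis using edge_span[of u w l y] y(2) by blast
qed

lemma is_BPD_T: "is_BPD a n T"
  unfolding is_BPD_def
proof (intro conjI ballI impI)
  show "consistent a n T" using consT .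
next
  fix p q assume p: "p \<in> pipes a n T" and q: "q \<in> pipes a n T" and pq: "p \<noteq> q"
  obtain l where l: "l \<in> {a..k}" "p = P l" using p pipes_T by blast
  obtain l' where l': "l' \<in> {a..k}" "q = P l'" using q pipes_T by blast
  let ?S = "{c \<in> {a..n}. cross_at T p q c}"
  have "\<forall>c1\<in>?S. \<forall>c2\<in>?S. c1 = c2"
  proof (intro ballI)
    fix c1 c2 assume c1: "c1 \<in> ?S" and c2: "c2 \<in> ?S"
    have h1: "((c1, SV) \<in> P l \<and> (c1, SH) \<in> P l') \<or> ((c1, SH) \<in> P l \<and> (c1, SV) \<in> P l')"
      using c1 l l' unfolding cross_at_def by auto
    have h2: "((c2, SV) \<in> P l \<and> (c2, SH) \<in> P l') \<or> ((c2, SH) \<in> P l \<and> (c2, SV) \<in> P l')"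
      using c2 l l' unfolding cross_at_def by auto
    show "c1 = c2"
    proof (cases "(c1, SV) \<in> P l")
      case True
      then have e1: "c1 = u l" "u l = w l" using SV_in_P by auto
      have "(c2, SV) \<in> P l"
      proof (rule ccontr)
        assume "(c2, SV) \<notin> P l"
        then have "(c2, SH) \<in> P l" using h2 by blast
        then show False using SH_in_P e1 by fastforce
      qed
      then show ?thesis using SV_in_P e1 by auto
    next
      case False
      then have "(c1, SV) \<in> P l'" using h1 by blast
      then have e1: "c1 = u l'" "u l' = w l'" using SV_in_P by auto
      have "(c2, SV) \<in> P l'"
      proof (rule ccontr)
        assume "(c2, SV) \<notin> P l'"
        then have "(c2, SH) \<in> P l'" using h2 by blast
        then show False using SH_in_P e1 by fastforce
      qed
      then show ?thesis using SV_in_P e1 by auto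
    qed
  qed
  moreover have fin: "finite ?S" by (rule finite_subset[of _ "{a..n}"]) auto
  ultimately show "card ?S \<le> 1" using card_le_Suc0_iff_eq[OF fin] by simp
next
  fix p assume p: "p \<in> pipes a n T"
  obtain l where l: "l \<in> {a..k}" "p = P l" using p pipes_T by blast
  show "enters a n p" unfolding enters_def using P_edges[OF l(1)] w_in[OF l(1)] l(2) by blast
  show "exits a n p" unfolding exits_def using P_edges[OF l(1)] u_in[OF l(1)] l(2) by blast
qed

lemma sat_T:
  assumes gNw: "\<forall>l\<in>{a..k}. gN (w l) = Some l" and gNN: "\<forall>c\<in>{a..n}. gN c \<noteq> None \<longrightarrow> c \<in> w ` {a..k}"
    and gSu: "\<forall>l\<in>{a..k}. gS (u l) = Some l" and gSS: "\<forall>c\<in>{a..n}. gS c \<noteq> None \<longrightarrow> c \<in> u ` {a..k}"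
  shows "satisfies a n T gN None gS None"
  unfolding satisfies_def
proof (intro exI[of _ Lb] conjI ballI)
  show "valid_labeling a n T Lb"
    unfolding valid_labeling_def
  proof (intro conjI ballI impI)
    show "inj_on Lb (pipes a n T)"
    proof (rule inj_onI)
      fix p q assume p: "p \<in> pipes a n T" and q: "q \<in> pipes a n T" and e: "Lb p = Lb q"
      obtain l where l: "l \<in> {a..k}" "p = P l" using p pipes_T by blast
      obtain l' where l': "l' \<in> {a..k}" "q = P l'" using q pipes_T by blast
      show "p = q" using e l l' Lb_P by simp
    qed
    fix c p q assume c: "c \<in> {a..n}" "T c = Cross" and p: "p \<in> pipes a n T" and q: "q \<in> pipes a n T"
      and sv: "(c, SV) \<in> p" and sh: "(c, SH) \<in> q"
    obtain l where l: "l \<in> {a..k}" "p = P l" using p pipes_T by blast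
    obtain l' where l': "l' \<in> {a..k}" "q = P l'" using q pipes_T by blast
    have a1: "c = u l" "u l = w l" using SV_in_P sv l by auto
    have a2: "u l' < c" "c < w l'" using SH_in_P sh l' by auto
    have "l \<noteq> l'" using a1 a2 by auto
    then have "l < l'" using CndD[OF C l'(1) l(1) _ _] a1 a2 by force
    then show "Lb p < Lb q" using l l' Lb_P by simp
  qed
next
  have noR: "\<not> (\<exists>x\<in>strands a n T. VE (n + 1) \<in> strand_edges x)"
  proof
    assume "\<exists>x\<in>strands a n T. VE (n + 1) \<in> strand_edges x"
    then have "uses_right (T n)" unfolding VE_used by auto
    then obtain l where l: "l \<in> {a..k}" "u l \<le> n" "n < w l" using ur_T by blast
    then show False using w_in[OF l(1)] by simp
  qed
  then show "edge_cond a n T Lb (VE (n + 1)) None"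
    unfolding edge_cond_def using ex_pipe_edge[of a n T "VE (n + 1)"] by blast
next
  have noL: "\<not> (\<exists>x\<in>strands a n T. VE a \<in> strand_edges x)"
  proof
    assume "\<exists>x\<in>strands a n T. VE a \<in> strand_edges x"
    then have "uses_left (T a)" unfolding VE_used by auto
    then obtain l where l: "l \<in> {a..k}" "u l < a" using ul_T by blast
    then show False using u_in[OF l(1)] by simp
  qed
  then show "edge_cond a n T Lb (VE a) None"
    unfolding edge_cond_def using ex_pipe_edge[of a n T "VE a"] by blast
next
  fix c assume c: "c \<in> {a..n}"
  show "edge_cond a n T Lb (TE c) (gN c)"
    unfolding edge_cond_def
  proof (intro conjI ballI impI)
    show "(\<exists>p\<in>pipes a n T. TE c \<in> pipe_edges p) \<longleftrightarrow> gN c \<noteq> None"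
    proof
      assume "\<exists>p\<in>pipes a n T. TE c \<in> pipe_edges p"
      then obtain p where p: "p \<in> pipes a n T" "TE c \<in> pipe_edges p" by blast
      obtain l where l: "l \<in> {a..k}" "p = P l" using p(1) pipes_T by blast
      have "w l = c" using P_edge_span[of "TE c" l] p(2) l(2) by simp
      then show "gN c \<noteq> None" using gNw l by auto
    next
      assume "gN c \<noteq> None"
      then obtain l where l: "l \<in> {a..k}" "c = w l" using gNN c by blast
      then have "P l \<in> pipes a n T" "TE c \<in> pipe_edges (P l)" using P_edges[OF l(1)] pipes_T by auto
      then show "\<exists>p\<in>pipes a n T. TE c \<in> pipe_edges p" by blast
    qed
    fix p assume p: "p \<in> pipes a n T" and e: "TE c \<in> pipe_edges p"
    obtain l where l: "l \<in> {a..k}" "p = P l" using p pipes_T by blast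
    then have "w l = c" using P_edge_span[of "TE c" l] e by simp
    then show "gN c = Some (Lb p)" using gNw l Lb_P by auto
  qed
  show "edge_cond a n T Lb (BE c) (gS c)"
    unfolding edge_cond_def
  proof (intro conjI ballI impI)
    show "(\<exists>p\<in>pipes a n T. BE c \<in> pipe_edges p) \<longleftrightarrow> gS c \<noteq> None"
    proof
      assume "\<exists>p\<in>pipes a n T. BE c \<in> pipe_edges p"
      then obtain p where p: "p \<in> pipes a n T" "BE c \<in> pipe_edges p" by blast
      obtain l where l: "l \<in> {a..k}" "p = P l" using p(1) pipes_T by blast
      have "u l = c" using P_edge_span[of "BE c" l] p(2) l(2) by simp
      then show "gS c \<noteq> None" using gSu l by auto
    next
      assume "gS c \<noteq> None"
      then obtain l where l: "l \<in> {a..k}" "c = u l" using gSS c by blast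
      then have "P l \<in> pipes a n T" "BE c \<in> pipe_edges (P l)" using P_edges[OF l(1)] pipes_T by auto
      then show "\<exists>p\<in>pipes a n T. BE c \<in> pipe_edges p" by blast
    qed
    fix p assume p: "p \<in> pipes a n T" and e: "BE c \<in> pipe_edges p"
    obtain l where l: "l \<in> {a..k}" "p = P l" using p pipes_T by blast
    then have "u l = c" using P_edge_span[of "BE c" l] e by simp
    then show "gS c = Some (Lb p)" using gSu l Lb_P by auto
  qed
qed

end




lemma ur_iff: "uses_right t \<longleftrightarrow> t \<in> {Hor, RElb, Cross}" by (cases t) auto
lemma ul_iff: "uses_left t \<longleftrightarrow> t \<in> {Hor, JElb, Cross}" by (cases t) auto

locale un_ctx =
  fixes a k n :: int and u w :: "int \<Rightarrow> int" and gN gS :: "int \<Rightarrow> int option"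
    and D :: tiling and L :: "pipe \<Rightarrow> int"
  assumes ak: "a \<le> k" and kn: "k \<le> n" and uS: "u \<in> Sperm a n" and wS: "w \<in> Sperm a n"
    and gNw: "\<forall>l\<in>{a..k}. gN (w l) = Some l" and gNN: "\<forall>c\<in>{a..n}. gN c \<noteq> None \<longrightarrow> c \<in> w ` {a..k}"
    and gSu: "\<forall>l\<in>{a..k}. gS (u l) = Some l" and gSS: "\<forall>c\<in>{a..n}. gS c \<noteq> None \<longrightarrow> c \<in> u ` {a..k}"
    and cons: "consistent a n D" and vl: "valid_labeling a n D L"
    and eR: "edge_cond a n D L (VE (n + 1)) None" and eL: "edge_cond a n D L (VE a) None"
    and eT: "\<forall>c\<in>{a..n}. edge_cond a n D L (TE c) (gN c)"
    and eB: "\<forall>c\<in>{a..n}. edge_cond a n D L (BE c) (gS c)"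
begin

lemma an: "a \<le> n" using ak kn by simp
lemma injU: "inj u" using Sperm_inj[OF uS] .
lemma injW: "inj w" using Sperm_inj[OF wS] .
lemma u_in: "l \<in> {a..k} \<Longrightarrow> u l \<in> {a..n}" using Sperm_image[OF uS] kn by auto
lemma w_in: "l \<in> {a..k} \<Longrightarrow> w l \<in> {a..n}" using Sperm_image[OF wS] kn by auto

lemma gN_some: "c \<in> {a..n} \<Longrightarrow> gN c = Some l \<Longrightarrow> l \<in> {a..k} \<and> c = w l"
proof -
  assume c: "c \<in> {a..n}" "gN c = Some l"
  then obtain l' where l': "l' \<in> {a..k}" "c = w l'" using gNN by blast
  then have "gN c = Some l'" using gNw by simp
  then show ?thesis using c l' by simp
qed

lemma gS_some: "c \<in> {a..n} \<Longrightarrow> gS c = Some l \<Longrightarrow> l \<in> {a..k} \<and> c = u l"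
proof -
  assume c: "c \<in> {a..n}" "gS c = Some l"
  then obtain l' where l': "l' \<in> {a..k}" "c = u l'" using gSS by blast
  then have "gS c = Some l'" using gSu by simp
  then show ?thesis using c l' by simp
qed

lemma noR: "\<not> uses_right (D n)"
proof
  assume "uses_right (D n)"
  then have "\<exists>x\<in>strands a n D. VE (n + 1) \<in> strand_edges x" unfolding VE_used using an by simp
  then have "\<exists>p\<in>pipes a n D. VE (n + 1) \<in> pipe_edges p" using ex_pipe_edge by blast
  then show False using eR unfolding edge_cond_def by simp
qed

lemma noL: "\<not> uses_left (D a)"
proof
  assume "uses_left (D a)"
  then have "\<exists>x\<in>strands a n D. VE a \<in> strand_edges x" unfolding VE_used using an by simp
  then have "\<exists>p\<in>pipes a n D. VE a \<in> pipe_edges p" using ex_pipe_edge by blast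
  then show False using eL unfolding edge_cond_def by simp
qed

lemma N_iff: "c \<in> {a..n} \<Longrightarrow> D c \<in> {Vert, Cross, JElb} \<longleftrightarrow> gN c \<noteq> None"
proof -
  assume c: "c \<in> {a..n}"
  have "D c \<in> {Vert, Cross, JElb} \<longleftrightarrow> (\<exists>x\<in>strands a n D. TE c \<in> strand_edges x)" using TE_used c by simp
  also have "\<dots> \<longleftrightarrow> (\<exists>p\<in>pipes a n D. TE c \<in> pipe_edges p)" using ex_pipe_edge by simp
  also have "\<dots> \<longleftrightarrow> gN c \<noteq> None" using eT c unfolding edge_cond_def by blast
  finally show ?thesis .
qed

lemma S_iff: "c \<in> {a..n} \<Longrightarrow> D c \<in> {Vert, Cross, RElb} \<longleftrightarrow> gS c \<noteq> None"
proof -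
  assume c: "c \<in> {a..n}"
  have "D c \<in> {Vert, Cross, RElb} \<longleftrightarrow> (\<exists>x\<in>strands a n D. BE c \<in> strand_edges x)" using BE_used c by simp
  also have "\<dots> \<longleftrightarrow> (\<exists>p\<in>pipes a n D. BE c \<in> pipe_edges p)" using ex_pipe_edge by simp
  also have "\<dots> \<longleftrightarrow> gS c \<noteq> None" using eB c unfolding edge_cond_def by blast
  finally show ?thesis .
qed

lemma lab_T: "x \<in> strands a n D \<Longrightarrow> TE c \<in> strand_edges x \<Longrightarrow> gN c = Some (L (pcomp a n D x))"
proof -
  assume x: "x \<in> strands a n D" "TE c \<in> strand_edges x"
  obtain c' s where cs: "x = (c', s)" by (cases x)
  then have "c' = c" using x(2) TE_strand by simp
  then have c: "c \<in> {a..n}" using x(1) cs strands_iff by simp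
  have "TE c \<in> pipe_edges (pcomp a n D x)" unfolding pipe_edges_def using comp_self[of x] x(2) by blast
  then show ?thesis using eT c comp_in_pipes[OF x(1)] unfolding edge_cond_def by blast
qed

lemma lab_B: "x \<in> strands a n D \<Longrightarrow> BE c \<in> strand_edges x \<Longrightarrow> gS c = Some (L (pcomp a n D x))"
proof -
  assume x: "x \<in> strands a n D" "BE c \<in> strand_edges x"
  obtain c' s where cs: "x = (c', s)" by (cases x)
  then have "c' = c" using x(2) BE_strand by simp
  then have c: "c \<in> {a..n}" using x(1) cs strands_iff by simp
  have "BE c \<in> pipe_edges (pcomp a n D x)" unfolding pipe_edges_def using comp_self[of x] x(2) by blast
  then show ?thesis using eB c comp_in_pipes[OF x(1)] unfolding edge_cond_def by blast
qed

lemma consD: "a \<le> c \<Longrightarrow> c < n \<Longrightarrow> uses_right (D c) \<longleftrightarrow> uses_left (D (c + 1))"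
  using cons unfolding consistent_def by blast

lemma scanR_aux:
  "x \<in> {a..n} \<Longrightarrow> nat (n - x) = m \<Longrightarrow> uses_right (D x) \<Longrightarrow>
   \<exists>y. x < y \<and> y \<le> n \<and> D y = JElb \<and> (\<forall>c. x < c \<and> c < y \<longrightarrow> D c \<in> {Hor, Cross})"
proof (induction m arbitrary: x)
  case 0
  then have "x = n" by simp
  then show ?case using noR 0 by simp
next
  case (Suc m)
  have xn: "x < n" using Suc.prems by simp
  then have ul: "uses_left (D (x + 1))" using consD[of x] Suc.prems by simp
  show ?case
  proof (cases "D (x + 1) = JElb")
    case True then show ?thesis using xn by (intro exI[of _ "x + 1"]) auto
  next
    case False
    then have hx: "D (x + 1) \<in> {Hor, Cross}" using ul ul_iff by auto
    then have "uses_right (D (x + 1))" using ur_iff by auto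
    moreover have "x + 1 \<in> {a..n}" "nat (n - (x + 1)) = m" using Suc.prems xn by auto
    ultimately obtain y where y: "x + 1 < y" "y \<le> n" "D y = JElb" "\<forall>c. x + 1 < c \<and> c < y \<longrightarrow> D c \<in> {Hor, Cross}"
      using Suc.IH[of "x + 1"] by blast
    have "\<forall>c. x < c \<and> c < y \<longrightarrow> D c \<in> {Hor, Cross}"
    proof (intro allI impI)
      fix c assume c: "x < c \<and> c < y"
      show "D c \<in> {Hor, Cross}"
      proof (cases "c = x + 1")
        case True then show ?thesis using hx by simp
      next
        case False then show ?thesis using y(4) c by auto
      qed
    qed
    then show ?thesis using y by (intro exI[of _ y]) auto
  qed
qed

lemma scanR: "x \<in> {a..n} \<Longrightarrow> uses_right (D x) \<Longrightarrow>
   \<exists>y. x < y \<and> y \<le> n \<and> D y = JElb \<and> (\<forall>c. x < c \<and> c < y \<longrightarrow> D c \<in> {Hor, Cross})"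
  using scanR_aux by blast

lemma scanL_aux:
  "x \<in> {a..n} \<Longrightarrow> nat (x - a) = m \<Longrightarrow> uses_left (D x) \<Longrightarrow>
   \<exists>z. a \<le> z \<and> z < x \<and> D z = RElb \<and> (\<forall>c. z < c \<and> c < x \<longrightarrow> D c \<in> {Hor, Cross})"
proof (induction m arbitrary: x)
  case 0
  then have "x = a" by simp
  then show ?case using noL 0 by simp
next
  case (Suc m)
  have xa: "a < x" using Suc.prems by simp
  then have ur: "uses_right (D (x - 1))" using consD[of "x - 1"] Suc.prems by simp
  show ?case
  proof (cases "D (x - 1) = RElb")
    case True then show ?thesis using xa by (intro exI[of _ "x - 1"]) auto
  next
    case False
    then have hx: "D (x - 1) \<in> {Hor, Cross}" using ur ur_iff by auto
    then have "uses_left (D (x - 1))" using ul_iff by auto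
    moreover have "x - 1 \<in> {a..n}" "nat (x - 1 - a) = m" using Suc.prems xa by auto
    ultimately obtain z where z: "a \<le> z" "z < x - 1" "D z = RElb" "\<forall>c. z < c \<and> c < x - 1 \<longrightarrow> D c \<in> {Hor, Cross}"
      using Suc.IH[of "x - 1"] by blast
    have "\<forall>c. z < c \<and> c < x \<longrightarrow> D c \<in> {Hor, Cross}"
    proof (intro allI impI)
      fix c assume c: "z < c \<and> c < x"
      show "D c \<in> {Hor, Cross}"
      proof (cases "c = x - 1")
        case True then show ?thesis using hx by simp
      next
        case False then show ?thesis using z(4) c by auto
      qed
    qed
    then show ?thesis using z by (intro exI[of _ z]) auto
  qed
qed

lemma scanL: "x \<in> {a..n} \<Longrightarrow> uses_left (D x) \<Longrightarrow>
   \<exists>z. a \<le> z \<and> z < x \<and> D z = RElb \<and> (\<forall>c. z < c \<and> c < x \<longrightarrow> D c \<in> {Hor, Cross})"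
  using scanL_aux by blast

lemma runreach:
  assumes x: "x \<in> {a..n}" and y: "y \<le> n" "x < y" and dx: "D x = RElb" and dy: "D y = JElb"
    and mid: "\<forall>c. x < c \<and> c < y \<longrightarrow> D c \<in> {Hor, Cross}"
  shows "(joined a n D)\<^sup>*\<^sup>* (x, SR) (y, SJ) \<and> (\<forall>c. x < c \<and> c < y \<longrightarrow> (joined a n D)\<^sup>*\<^sup>* (x, SR) (c, SH))"
proof -
  define hh where "hh c = (if c = x then (c, SR) else if c = y then (c, SJ) else (c, SH))" for c
  have hs: "hh c \<in> strands a n D" if "x \<le> c" "c \<le> y" for c
  proof -
    have "c \<in> {a..n}" using x y that by auto
    moreover have "snd (hh c) \<in> tile_strands (D c)"
    proof (cases "c = x")
      case True then show ?thesis unfolding hh_def using dx by simp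
    next
      case False
      show ?thesis
      proof (cases "c = y")
        case True then show ?thesis unfolding hh_def using dx dy False by simp
      next
        case False2: False
        then have "D c \<in> {Hor, Cross}" using mid that False by simp
        then show ?thesis unfolding hh_def using False False2 by auto
      qed
    qed
    moreover have "fst (hh c) = c" unfolding hh_def by simp
    ultimately show ?thesis using strands_iff by (metis prod.collapse)
  qed
  have hj: "joined a n D (hh c) (hh (c + 1))" if "x \<le> c" "c < y" for c
    unfolding joined_def
  proof (intro conjI)
    show "hh c \<in> strands a n D" "hh (c + 1) \<in> strands a n D" using hs that by auto
    show "hh c \<noteq> hh (c + 1)" unfolding hh_def by auto
    have "VE (c + 1) \<in> strand_edges (hh c)" unfolding hh_def using that by auto
    moreover have "VE (c + 1) \<in> strand_edges (hh (c + 1))" unfolding hh_def using that by auto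
    ultimately show "strand_edges (hh c) \<inter> strand_edges (hh (c + 1)) \<noteq> {}" by blast
  qed
  have r: "x + int m \<le> y \<Longrightarrow> (joined a n D)\<^sup>*\<^sup>* (hh x) (hh (x + int m))" for m
  proof (induction m)
    case 0 then show ?case by simp
  next
    case (Suc m)
    then have "(joined a n D)\<^sup>*\<^sup>* (hh x) (hh (x + int m))" by simp
    moreover have "joined a n D (hh (x + int m)) (hh (x + int m + 1))"
      by (rule hj) (use Suc.prems in auto)
    ultimately have "(joined a n D)\<^sup>*\<^sup>* (hh x) (hh (x + int m + 1))" by (rule rtranclp.rtrancl_into_rtrancl)
    moreover have "x + int m + 1 = x + int (Suc m)" by simp
    ultimately show ?case by metis
  qed
  have r2: "(joined a n D)\<^sup>*\<^sup>* (hh x) (hh c)" if "x \<le> c" "c \<le> y" for c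
  proof -
    have "c = x + int (nat (c - x))" using that by simp
    then show ?thesis using r[of "nat (c - x)"] that by metis
  qed
  have hx: "hh x = (x, SR)" unfolding hh_def by simp
  have hy: "hh y = (y, SJ)" unfolding hh_def using y by simp
  show ?thesis
  proof (intro conjI allI impI)
    show "(joined a n D)\<^sup>*\<^sup>* (x, SR) (y, SJ)" using r2[of y] y hx hy by simp
    fix c assume c: "x < c \<and> c < y"
    then have "hh c = (c, SH)" unfolding hh_def by auto
    then show "(joined a n D)\<^sup>*\<^sup>* (x, SR) (c, SH)" using r2[of c] c hx by simp
  qed
qed

lemma Struct:
  assumes l: "l \<in> {a..k}"
  shows "(u l = w l \<and> D (u l) \<in> {Vert, Cross}) \<or>
    (u l < w l \<and> D (u l) = RElb \<and> D (w l) = JElb \<and>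
      (\<forall>c. u l < c \<and> c < w l \<longrightarrow> D c = Hor \<or> (D c = Cross \<and> (\<exists>l'\<in>{a..k}. l' < l \<and> u l' = c \<and> w l' = c))))"
proof -
  let ?x = "u l"
  have xin: "?x \<in> {a..n}" using u_in[OF l] .
  have gx: "gS ?x = Some l" using gSu l by simp
  then have "D ?x \<in> {Vert, Cross, RElb}" using S_iff[OF xin] by simp
  then consider "D ?x \<in> {Vert, Cross}" | "D ?x = RElb" by auto
  then show ?thesis
  proof cases
    case 1
    have sv: "(?x, SV) \<in> strands a n D" using 1 xin strands_iff by auto
    have "gN ?x = Some (L (pcomp a n D (?x, SV)))" using lab_T[OF sv] by simp
    moreover have "gS ?x = Some (L (pcomp a n D (?x, SV)))" using lab_B[OF sv] by simp
    ultimately have "gN ?x = Some l" using gx by simp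
    then have "?x = w l" using gN_some[OF xin] by simp
    then show ?thesis using 1 by simp
  next
    case 2
    then have "uses_right (D ?x)" by simp
    then obtain y where y: "?x < y" "y \<le> n" "D y = JElb" "\<forall>c. ?x < c \<and> c < y \<longrightarrow> D c \<in> {Hor, Cross}"
      using scanR[OF xin] by blast
    have rr: "(joined a n D)\<^sup>*\<^sup>* (?x, SR) (y, SJ)" "\<forall>c. ?x < c \<and> c < y \<longrightarrow> (joined a n D)\<^sup>*\<^sup>* (?x, SR) (c, SH)"
      using runreach[OF xin y(2) y(1) 2 y(3) y(4)] by auto
    have sr: "(?x, SR) \<in> strands a n D" using 2 xin strands_iff by auto
    let ?p = "pcomp a n D (?x, SR)"
    have pp: "?p \<in> pipes a n D" using comp_in_pipes[OF sr] .
    have Lp: "gS ?x = Some (L ?p)" using lab_B[OF sr] by simp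
    then have Lpl: "L ?p = l" using gx by simp
    have yj: "(y, SJ) \<in> ?p" using rr(1) unfolding pcomp_def by simp
    have yjs: "(y, SJ) \<in> strands a n D" using pipe_strands[OF pp yj] .
    have "?p = pcomp a n D (y, SJ)" using pipe_eq_comp[OF pp yj] .
    then have "gN y = Some l" using lab_T[OF yjs, of y] Lpl by simp
    then have yw: "y = w l" using gN_some[of y l] y xin by simp
    have mid: "D c = Hor \<or> (D c = Cross \<and> (\<exists>l'\<in>{a..k}. l' < l \<and> u l' = c \<and> w l' = c))"
      if c: "?x < c" "c < y" for c
    proof (cases "D c = Hor")
      case True then show ?thesis by simp
    next
      case False
      then have dc: "D c = Cross" using y(4) c by auto
      have cin: "c \<in> {a..n}" using c xin y by auto
      have sv: "(c, SV) \<in> strands a n D" using dc cin strands_iff by auto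
      let ?q = "pcomp a n D (c, SV)"
      have qp: "?q \<in> pipes a n D" using comp_in_pipes[OF sv] .
      have sh: "(c, SH) \<in> ?p" using rr(2) c unfolding pcomp_def by simp
      have "L ?q < L ?p" using vl cin dc qp pp comp_self[of "(c, SV)"] sh unfolding valid_labeling_def by blast
      then have lt: "L ?q < l" using Lpl by simp
      have "gN c = Some (L ?q)" using lab_T[OF sv] by simp
      then have e1: "L ?q \<in> {a..k}" "c = w (L ?q)" using gN_some[OF cin] by auto
      have "gS c = Some (L ?q)" using lab_B[OF sv] by simp
      then have e2: "c = u (L ?q)" using gS_some[OF cin] by auto
      show ?thesis using dc e1 e2 lt by metis
    qed
    show ?thesis using 2 y yw mid by auto
  qed
qed

lemma inN: "l \<in> {a..k} \<Longrightarrow> D (w l) \<in> {Vert, Cross, JElb}"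
  using N_iff[OF w_in] gNw by auto

lemma inS: "l \<in> {a..k} \<Longrightarrow> D (u l) \<in> {Vert, Cross, RElb}"
  using S_iff[OF u_in] gSu by auto

lemma Struct_nt:
  assumes l: "l \<in> {a..k}" and nt: "u l < w l"
  shows "D (u l) = RElb \<and> D (w l) = JElb \<and>
      (\<forall>c. u l < c \<and> c < w l \<longrightarrow> D c = Hor \<or> (D c = Cross \<and> (\<exists>l'\<in>{a..k}. l' < l \<and> u l' = c \<and> w l' = c)))"
  using Struct[OF l] nt by auto

lemma Cnd_D: "Cnd a k u w"
  unfolding Cnd_def
proof (intro ballI)
  fix l assume l: "l \<in> {a..k}"
  show "u l \<le> w l \<and> (\<forall>l'\<in>{a..k}. l' \<noteq> l \<longrightarrow> u l < w l \<longrightarrow>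
      (u l \<le> u l' \<and> u l' \<le> w l \<or> u l \<le> w l' \<and> w l' \<le> w l) \<longrightarrow>
      (u l' = w l' \<and> l' < l \<and> u l < u l' \<and> u l' < w l))"
  proof (rule conjI)
    show "u l \<le> w l" using Struct[OF l] by auto
    show "\<forall>l'\<in>{a..k}. l' \<noteq> l \<longrightarrow> u l < w l \<longrightarrow>
      (u l \<le> u l' \<and> u l' \<le> w l \<or> u l \<le> w l' \<and> w l' \<le> w l) \<longrightarrow>
      (u l' = w l' \<and> l' < l \<and> u l < u l' \<and> u l' < w l)"
    proof (intro ballI impI)
      fix l' assume l': "l' \<in> {a..k}" "l' \<noteq> l" and nt: "u l < w l"
        and h: "u l \<le> u l' \<and> u l' \<le> w l \<or> u l \<le> w l' \<and> w l' \<le> w l"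
      note st = Struct_nt[OF l nt]
      from h show "u l' = w l' \<and> l' < l \<and> u l < u l' \<and> u l' < w l"
      proof
        assume h1: "u l \<le> u l' \<and> u l' \<le> w l"
        have "u l' \<noteq> u l" using injU l'(2) by (simp add: inj_eq)
        moreover have "u l' \<noteq> w l" using inS[OF l'(1)] st by auto
        ultimately have i: "u l < u l'" "u l' < w l" using h1 by auto
        then have "D (u l') = Hor \<or> (D (u l') = Cross \<and> (\<exists>l''\<in>{a..k}. l'' < l \<and> u l'' = u l' \<and> w l'' = u l'))"
          using st by blast
        moreover have "D (u l') \<noteq> Hor" using inS[OF l'(1)] by auto
        ultimately obtain l'' where l'': "l'' \<in> {a..k}" "l'' < l" "u l'' = u l'" "w l'' = u l'" by blast
        then have "l'' = l'" using injU by (simp add: inj_eq)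
        then show ?thesis using l'' i by simp
      next
        assume h1: "u l \<le> w l' \<and> w l' \<le> w l"
        have "w l' \<noteq> w l" using injW l'(2) by (simp add: inj_eq)
        moreover have "w l' \<noteq> u l" using inN[OF l'(1)] st by auto
        ultimately have i: "u l < w l'" "w l' < w l" using h1 by auto
        then have "D (w l') = Hor \<or> (D (w l') = Cross \<and> (\<exists>l''\<in>{a..k}. l'' < l \<and> u l'' = w l' \<and> w l'' = w l'))"
          using st by blast
        moreover have "D (w l') \<noteq> Hor" using inN[OF l'(1)] by auto
        ultimately obtain l'' where l'': "l'' \<in> {a..k}" "l'' < l" "u l'' = w l'" "w l'' = w l'" by blast
        then have "l'' = l'" using injW by (simp add: inj_eq)
        then show ?thesis using l'' i by simp
      qed
    qed
  qed
qed

lemma N_mem: "c \<in> {a..n} \<Longrightarrow> c \<in> w ` {a..k} \<longleftrightarrow> D c \<in> {Vert, Cross, JElb}"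
proof -
  assume c: "c \<in> {a..n}"
  have "c \<in> w ` {a..k} \<longleftrightarrow> gN c \<noteq> None" using gNN gNw c by auto
  then show ?thesis using N_iff[OF c] by simp
qed

lemma S_mem: "c \<in> {a..n} \<Longrightarrow> c \<in> u ` {a..k} \<longleftrightarrow> D c \<in> {Vert, Cross, RElb}"
proof -
  assume c: "c \<in> {a..n}"
  have "c \<in> u ` {a..k} \<longleftrightarrow> gS c \<noteq> None" using gSS gSu c by auto
  then show ?thesis using S_iff[OF c] by simp
qed

lemma D_T:
  assumes c: "c \<in> {a..n}"
  shows "D c = Tl a k u w c"
proof (cases "\<exists>l\<in>{a..k}. u l < w l \<and> c = u l")
  case True
  then obtain l where l: "l \<in> {a..k}" "u l < w l" "c = u l" by blast
  then show ?thesis using Struct_nt[OF l(1,2)] True unfolding Tl_def by simp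
next
  case F1: False
  show ?thesis
  proof (cases "\<exists>l\<in>{a..k}. u l < w l \<and> c = w l")
    case True
    then obtain l where l: "l \<in> {a..k}" "u l < w l" "c = w l" by blast
    then show ?thesis using Struct_nt[OF l(1,2)] True F1 unfolding Tl_def by simp
  next
    case F2: False
    show ?thesis
    proof (cases "\<exists>l\<in>{a..k}. u l < c \<and> c < w l")
      case True
      then obtain l where l: "l \<in> {a..k}" "u l < c" "c < w l" by blast
      then have "D c = Hor \<or> D c = Cross" using Struct_nt[OF l(1)] by force
      moreover have "c \<in> w ` {a..k} \<longleftrightarrow> D c \<in> {Vert, Cross, JElb}" using N_mem[OF c] .
      ultimately have "D c = (if c \<in> w ` {a..k} then Cross else Hor)" by auto
      then show ?thesis using True F1 F2 unfolding Tl_def by simp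
    next
      case F3: False
      have nR: "D c \<noteq> RElb"
      proof
        assume dc: "D c = RElb"
        then have "c \<in> u ` {a..k}" using S_mem[OF c] by simp
        then obtain l where l: "l \<in> {a..k}" "c = u l" by blast
        then have "u l < w l" using Struct[OF l(1)] dc by auto
        then show False using F1 l by blast
      qed
      have nJ: "D c \<noteq> JElb"
      proof
        assume dc: "D c = JElb"
        then have "c \<in> w ` {a..k}" using N_mem[OF c] by simp
        then obtain l where l: "l \<in> {a..k}" "c = w l" by blast
        then have "u l < w l" using Struct[OF l(1)] dc by auto
        then show False using F2 l by blast
      qed
      have nH: "D c \<notin> {Hor, Cross}"
      proof
        assume dc: "D c \<in> {Hor, Cross}"
        then have "uses_left (D c)" using ul_iff by auto
        then obtain z where z: "a \<le> z" "z < c" "D z = RElb" "\<forall>c'. z < c' \<and> c' < c \<longrightarrow> D c' \<in> {Hor, Cross}"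
          using scanL[OF c] by blast
        have zin: "z \<in> {a..n}" using z c by auto
        then have "z \<in> u ` {a..k}" using S_mem z(3) by simp
        then obtain l where l: "l \<in> {a..k}" "z = u l" by blast
        then have nt: "u l < w l" using Struct[OF l(1)] z(3) by auto
        have dw: "D (w l) = JElb" using Struct_nt[OF l(1) nt] by simp
        have "c < w l"
        proof (rule ccontr)
          assume "\<not> c < w l"
          then have "w l < c \<or> w l = c" by auto
          then show False
          proof
            assume "w l < c"
            then have "D (w l) \<in> {Hor, Cross}" using z(4) l nt by simp
            then show False using dw by simp
          next
            assume "w l = c" then show False using dw dc by simp
          qed
        qed
        then show False using F3 l z(2) by blast
      qed
      have "D c \<in> {Vert, Blank}" using nR nJ nH by (cases "D c") auto
      then have "D c = (if c \<in> w ` {a..k} then Vert else Blank)" using N_mem[OF c] by auto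
      then show ?thesis using F1 F2 F3 unfolding Tl_def by simp
    qed
  qed
qed

end




lemma blank_T:
  assumes C: "Cnd a k u w" and c: "c \<in> {a..n}"
  shows "Tl a k u w c = Blank \<longleftrightarrow> c \<in> Rset a k n u w"
proof -
  have le: "\<And>l. l \<in> {a..k} \<Longrightarrow> u l \<le> w l" using CndD0[OF C] .
  show ?thesis
  proof
    assume b: "Tl a k u w c = Blank"
    then have h: "\<not> (\<exists>l\<in>{a..k}. u l < w l \<and> c = u l)" "\<not> (\<exists>l\<in>{a..k}. u l < w l \<and> c = w l)"
      "\<not> (\<exists>l\<in>{a..k}. u l < c \<and> c < w l)" "c \<notin> w ` {a..k}"
      unfolding Tl_def by (auto split: if_splits)
    have "c \<notin> u ` {a..k}"
    proof
      assume "c \<in> u ` {a..k}"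
      then obtain l where l: "l \<in> {a..k}" "c = u l" by blast
      show False
      proof (cases "u l < w l")
        case True then show False using h(1) l by blast
      next
        case False
        then have "c = w l" using le[OF l(1)] l by simp
        then show False using h(4) l by blast
      qed
    qed
    moreover have "\<forall>l\<in>{a..k}. \<not> (u l < c \<and> c \<le> w l)"
    proof (intro ballI notI)
      fix l assume l: "l \<in> {a..k}" "u l < c \<and> c \<le> w l"
      show False
      proof (cases "c = w l")
        case True then show False using h(2) l by force
      next
        case False then show False using h(3) l by force
      qed
    qed
    ultimately show "c \<in> Rset a k n u w" unfolding Rset_def using c by simp
  next
    assume "c \<in> Rset a k n u w"
    then have r: "c \<notin> u ` {a..k}" "\<forall>l\<in>{a..k}. \<not> (u l < c \<and> c \<le> w l)" unfolding Rset_def by auto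
    have h1: "\<not> (\<exists>l\<in>{a..k}. u l < w l \<and> c = u l)" using r(1) by blast
    have h2: "\<not> (\<exists>l\<in>{a..k}. u l < w l \<and> c = w l)" using r(2) by force
    have h3: "\<not> (\<exists>l\<in>{a..k}. u l < c \<and> c < w l)" using r(2) by force
    have h4: "c \<notin> w ` {a..k}"
    proof
      assume "c \<in> w ` {a..k}"
      then obtain l where l: "l \<in> {a..k}" "c = w l" by blast
      show False
      proof (cases "u l < w l")
        case True then show False using h2 l by blast
      next
        case False
        then have "c = u l" using le[OF l(1)] l by simp
        then show False using r(1) l by blast
      qed
    qed
    show "Tl a k u w c = Blank" unfolding Tl_def using h1 h2 h3 h4 by simp
  qed
qed

theorem lemma2p42:
  fixes a k n :: int
    and gN gS :: "int \<Rightarrow> int option" and gE gW :: "int option"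
    and u w :: "int \<Rightarrow> int"
  assumes "a \<le> k" and "k \<le> n"
    and "bij_betw (\<lambda>c. the (gN c)) {c \<in> {a..n}. gN c \<noteq> None} {a..k}"
    and "bij_betw (\<lambda>c. the (gS c)) {c \<in> {a..n}. gS c \<noteq> None} {a..k}"
    and "gE = None" and "gW = None"
    and "w \<in> Sperm a n" and "\<forall>l\<in>{a..k}. gN (w l) = Some l"
    and "\<forall>i j. k < i \<and> i < j \<and> j \<le> n \<longrightarrow> w j < w i"
    and "u \<in> Sperm a n" and "\<forall>l\<in>{a..k}. gS (u l) = Some l"
    and "\<forall>i j. k < i \<and> i < j \<and> j \<le> n \<longrightarrow> u j < u i"
  shows "(kpath k u w \<longleftrightarrow> (\<exists>D. is_BPD a n D \<and> satisfies a n D gN gE gS gW))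
    \<and> (kpath k u w \<longrightarrow>
         (\<exists>D. is_BPD a n D \<and> satisfies a n D gN gE gS gW
            \<and> (\<forall>D'. is_BPD a n D' \<and> satisfies a n D' gN gE gS gW
                     \<longrightarrow> (\<forall>c\<in>{a..n}. D' c = D c))
            \<and> {c \<in> {a..n}. D c = Blank} = fixset {k<..n} u w))"
proof -
  note ak = assms(1) and kn = assms(2) and bN = assms(3) and bS = assms(4)
    and gE = assms(5) and gW = assms(6) and wS = assms(7) and gNw = assms(8)
    and uS = assms(10) and gSu = assms(11)
  have wd: "dec k n w" using assms(9) unfolding dec_def .
  have ud: "dec k n u" using assms(12) unfolding dec_def .
  have gNN: "\<forall>c\<in>{a..n}. gN c \<noteq> None \<longrightarrow> c \<in> w ` {a..k}"
  proof (intro ballI impI)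
    fix c assume c: "c \<in> {a..n}" "gN c \<noteq> None"
    then have l: "the (gN c) \<in> {a..k}" using bij_betw_apply[OF bN, of c] by simp
    let ?l = "the (gN c)"
    have wl: "w ?l \<in> {a..n}" using Sperm_image[OF wS] l kn by auto
    have g: "gN (w ?l) = Some ?l" using gNw l by simp
    have i: "inj_on (\<lambda>c. the (gN c)) {c \<in> {a..n}. gN c \<noteq> None}" using bN unfolding bij_betw_def by simp
    have m1: "w ?l \<in> {c \<in> {a..n}. gN c \<noteq> None}" using wl g by simp
    have m2: "c \<in> {c \<in> {a..n}. gN c \<noteq> None}" using c by simp
    have e: "the (gN (w ?l)) = the (gN c)" using g by simp
    have "w ?l = c" using inj_onD[OF i e m1 m2] .
    then show "c \<in> w ` {a..k}" using l by (metis imageI)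
  qed
  have gSS: "\<forall>c\<in>{a..n}. gS c \<noteq> None \<longrightarrow> c \<in> u ` {a..k}"
  proof (intro ballI impI)
    fix c assume c: "c \<in> {a..n}" "gS c \<noteq> None"
    then have l: "the (gS c) \<in> {a..k}" using bij_betw_apply[OF bS, of c] by simp
    let ?l = "the (gS c)"
    have ul: "u ?l \<in> {a..n}" using Sperm_image[OF uS] l kn by auto
    have g: "gS (u ?l) = Some ?l" using gSu l by simp
    have i: "inj_on (\<lambda>c. the (gS c)) {c \<in> {a..n}. gS c \<noteq> None}" using bS unfolding bij_betw_def by simp
    have m1: "u ?l \<in> {c \<in> {a..n}. gS c \<noteq> None}" using ul g by simp
    have m2: "c \<in> {c \<in> {a..n}. gS c \<noteq> None}" using c by simp
    have e: "the (gS (u ?l)) = the (gS c)" using g by simp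
    have "u ?l = c" using inj_onD[OF i e m1 m2] .
    then show "c \<in> u ` {a..k}" using l by (metis imageI)
  qed
  have bound: "\<forall>l\<in>{a..k}. u l < w l \<longrightarrow> a - 1 < u l"
  proof (intro ballI impI)
    fix l assume l: "l \<in> {a..k}"
    then have "u l \<in> u ` {a..n}" using kn by auto
    then have "u l \<in> {a..n}" using Sperm_image[OF uS] by simp
    then show "a - 1 < u l" by simp
  qed
  have K: "kpath k u w \<longleftrightarrow> Cnd a k u w"
  proof
    assume "kpath k u w" then show "Cnd a k u w" using kpath_Cnd[OF ak kn uS wS ud wd] by simp
  next
    assume C: "Cnd a k u w"
    then have "kpathB k (a - 1) u w" using construct[OF ak kn wS wd uS ud C bound] by simp
    then show "kpath k u w" by (rule kpathB_kpath)
  qed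
  have EX: "is_BPD a n (Tl a k u w) \<and> satisfies a n (Tl a k u w) gN None gS None" if C: "Cnd a k u w"
  proof -
    interpret ex_ctx a k n u w by unfold_locales (use ak kn uS wS C in auto)
    show ?thesis using is_BPD_T sat_T[OF gNw gNN gSu gSS] by simp
  qed
  have UN: "Cnd a k u w \<and> (\<forall>c\<in>{a..n}. D c = Tl a k u w c)"
    if D: "is_BPD a n D" "satisfies a n D gN None gS None" for D
  proof -
    obtain L where L: "valid_labeling a n D L" "edge_cond a n D L (VE (n + 1)) None"
      "edge_cond a n D L (VE a) None" "\<forall>c\<in>{a..n}. edge_cond a n D L (TE c) (gN c)"
      "\<forall>c\<in>{a..n}. edge_cond a n D L (BE c) (gS c)"
      using D(2) unfolding satisfies_def by blast
    have cons: "consistent a n D" using D(1) unfolding is_BPD_def by simp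
    interpret un_ctx a k n u w gN gS D L
      by unfold_locales (use ak kn uS wS gNw gNN gSu gSS cons L in auto)
    show ?thesis using Cnd_D D_T by simp
  qed
  show ?thesis
  proof (intro conjI impI)
    show "kpath k u w \<longleftrightarrow> (\<exists>D. is_BPD a n D \<and> satisfies a n D gN gE gS gW)"
      unfolding gE gW using K EX UN by blast
  next
    assume kp: "kpath k u w"
    then have C: "Cnd a k u w" using K by simp
    have fx: "fixset {k<..n} u w = Rset a k n u w" using construct[OF ak kn wS wd uS ud C bound] by simp
    have bl: "{c \<in> {a..n}. Tl a k u w c = Blank} = fixset {k<..n} u w"
      unfolding fx using blank_T[OF C] unfolding Rset_def by auto
    show "\<exists>D. is_BPD a n D \<and> satisfies a n D gN gE gS gW
            \<and> (\<forall>D'. is_BPD a n D' \<and> satisfies a n D' gN gE gS gW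
                     \<longrightarrow> (\<forall>c\<in>{a..n}. D' c = D c))
            \<and> {c \<in> {a..n}. D c = Blank} = fixset {k<..n} u w"
      unfolding gE gW using EX[OF C] UN bl by blast
  qed
qed


end
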